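(* Let $P$ be a finite poset, $\mathcal{J}\subseteq\mathrm{Hom}(P,\mathbb{N})$ a poset ideal, and $S$ a finite set with $\mathrm{Supp}(\mathcal{J})\subseteq S\subseteq P\times\mathbb{N}$, given the induced partial order from $P\times\mathbb{N}$. Let $R$ be a poset and $\phi:S\to R$ an isotone map with left strict chain fibers. Let $B$ be a basis of the kernel of the $k$-linear map $\bigoplus_{s\in S}k x_s\to\bigoplus_{r\in R}k x_r$, $x_s\mapsto x_{\phi(s)}$, consisting of differences $x_{s}-x_{s'}$ with $\phi(s)=\phi(s')$. Then $B$ is a regular sequence on $k[x_S]/L(P,\mathcal{J})$.
   Context: $\mathbb{N}=\{0,1,2,\dots\}$; $\mathrm{Hom}(P,\mathbb{N})$ is the set of isotone maps $P\to\mathbb{N}$ ordered pointwise; $\mathcal{J}^c$ is the complement of $\mathcal{J}$. The ascent of $\psi$ is $\Lambda\psi=\{(p,i): \psi(q)\le i<\psi(p)\ \forall q<p\}$. A marker for $\mathcal{J}$ is a poset ideal $I\subseteq P$ with an isotone $\alpha:I\to\mathbb{N}$ such that every isotone extension of $\alpha$ to $P$ lies in $\mathcal{J}$; its graph is $\Gamma\alpha=\{(p,\alpha(p)):p\in I\}$. With $k$ a field and $m_T=\prod_{t\in T}x_t$, the co-letterplace ideal $L(P,\mathcal{J})$ is generated by $m_{\Gamma\alpha}$ over markers $\alpha$ of $\mathcal{J}$, and the letterplace ideal $L(\mathcal{J},P)$ by $m_{\Lambda\psi}$, $\psi\in\mathcal{J}^c$. $\mathrm{Supp}(\mathcal{J})$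 is the (finite) set of $(p,i)$ such that $x_{p,i}$ divides some minimal monomial generator of $L(P,\mathcal{J})$ (equivalently of its Alexander dual $L(\mathcal{J},P)$); for $S\supseteq\mathrm{Supp}(\mathcal{J})$ these are regarded as ideals of $k[x_S]$ generated by their minimal generators. $P^{\mathrm{op}}\times\mathbb{N}$ has the product order with $P^{\mathrm{op}}$ the opposite poset. The map $\phi$ has left strict chain fibers if each fiber $\phi^{-1}(r)$ is a chain in $P^{\mathrm{op}}\times\mathbb{N}$ whose elements have pairwise distinct first coordinates. *)

theory Defs
  imports Main HOL.Vector_Spaces "HOL-Library.Poly_Mapping"
begin

type_synonym ('p, 'k) lpoly = "(('p \<times> nat) \<Rightarrow>\<^sub>0 nat) \<Rightarrow>\<^sub>0 'k"

definition var :: "'p \<times> nat \<Rightarrow> ('p, 'k::field) lpoly" where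
  "var s = Poly_Mapping.single (Poly_Mapping.single s 1) 1"

definition sqmon :: "('p \<times> nat) set \<Rightarrow> ('p, 'k::field) lpoly" where
  "sqmon T = Poly_Mapping.single (\<Sum>t\<in>T. Poly_Mapping.single t 1) 1"

definition cscale :: "'k::field \<Rightarrow> ('p, 'k) lpoly \<Rightarrow> ('p, 'k) lpoly" where
  "cscale c f = Poly_Mapping.single 0 c * f"

definition polyring :: "('p \<times> nat) set \<Rightarrow> ('p, 'k::field) lpoly set" where
  "polyring S = {f :: ('p, 'k) lpoly. \<forall>m \<in> Poly_Mapping.keys f. Poly_Mapping.keys m \<subseteq> S}"

definition ideal_in :: "('p, 'k::field) lpoly set \<Rightarrow> ('p, 'k) lpoly set \<Rightarrow> ('p, 'k) lpoly set" where
  "ideal_in A G = {\<Sum>g\<in>F. a g * g | F a. finite F \<and> F \<subseteq> G \<and> (\<forall>g\<in>F. a g \<in> A)}"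

definition hom_ideal :: "('p::order \<Rightarrow> nat) set \<Rightarrow> bool" where
  "hom_ideal J \<longleftrightarrow> (\<forall>\<psi>\<in>J. mono \<psi>) \<and>
     (\<forall>\<psi>\<in>J. \<forall>\<chi>. mono \<chi> \<and> \<chi> \<le> \<psi> \<longrightarrow> \<chi> \<in> J)"

definition poset_ideal :: "'p::order set \<Rightarrow> bool" where
  "poset_ideal I \<longleftrightarrow> (\<forall>p\<in>I. \<forall>q. q \<le> p \<longrightarrow> q \<in> I)"

text \<open>A marker for J: poset ideal I with isotone alpha on I such that every
  isotone extension of alpha to P lies in J.  Only the values of alpha on I matter.\<close>
definition marker :: "('p::order \<Rightarrow> nat) set \<Rightarrow> 'p set \<Rightarrow> ('p \<Rightarrow> nat) \<Rightarrow> bool" where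
  "marker J I \<alpha> \<longleftrightarrow> poset_ideal I \<and> mono_on I \<alpha> \<and>
     (\<forall>\<psi>. mono \<psi> \<and> (\<forall>p\<in>I. \<psi> p = \<alpha> p) \<longrightarrow> \<psi> \<in> J)"

definition graph :: "'p set \<Rightarrow> ('p \<Rightarrow> nat) \<Rightarrow> ('p \<times> nat) set" where
  "graph I \<alpha> = {(p, \<alpha> p) | p. p \<in> I}"

text \<open>Graphs of markers = supports of the generators m_{Gamma alpha} of L(P,J)\<close>
definition marker_graphs :: "('p::order \<Rightarrow> nat) set \<Rightarrow> ('p \<times> nat) set set" where
  "marker_graphs J = {graph I \<alpha> | I \<alpha>. marker J I \<alpha>}"

text \<open>Minimal monomial generators of L(P,J): squarefree monomials m_G, G a marker
  graph, not properly divisible by another generator (divisibility = inclusion).\<close>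
definition min_gen_graphs :: "('p::order \<Rightarrow> nat) set \<Rightarrow> ('p \<times> nat) set set" where
  "min_gen_graphs J = {G \<in> marker_graphs J. \<not> (\<exists>H\<in>marker_graphs J. H \<subset> G)}"

definition Supp :: "('p::order \<Rightarrow> nat) set \<Rightarrow> ('p \<times> nat) set" where
  "Supp J = \<Union>(min_gen_graphs J)"

text \<open>Co-letterplace ideal L(P,J) as an ideal of k[x_S], generated by its
  minimal monomial generators.\<close>
definition coletterplace :: "('p \<times> nat) set \<Rightarrow> ('p::order \<Rightarrow> nat) set \<Rightarrow> ('p, 'k::field) lpoly set" where
  "coletterplace S J = ideal_in (polyring S) (sqmon ` min_gen_graphs J)"

definition prod_le :: "'p::order \<times> nat \<Rightarrow> 'p \<times> nat \<Rightarrow> bool" where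
  "prod_le s t \<longleftrightarrow> fst s \<le> fst t \<and> snd s \<le> snd t"

definition op_prod_le :: "'p::order \<times> nat \<Rightarrow> 'p \<times> nat \<Rightarrow> bool" where
  "op_prod_le s t \<longleftrightarrow> fst t \<le> fst s \<and> snd s \<le> snd t"

definition left_strict_chain_fibers :: "('p::order \<times> nat) set \<Rightarrow> ('p \<times> nat \<Rightarrow> 'r) \<Rightarrow> bool" where
  "left_strict_chain_fibers S \<phi> \<longleftrightarrow>
     (\<forall>r. \<forall>s\<in>S. \<forall>t\<in>S. \<phi> s = r \<and> \<phi> t = r \<longrightarrow>
        (op_prod_le s t \<or> op_prod_le t s) \<and> (s \<noteq> t \<longrightarrow> fst s \<noteq> fst t))"

text \<open>Kernel of the linear map  (+)_{s in S} k x_s -> (+)_{r in R} k x_r, x_s |-> x_{phi s},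
  with linear forms viewed as polynomials.\<close>
definition lin_kernel :: "('p \<times> nat) set \<Rightarrow> ('p \<times> nat \<Rightarrow> 'r) \<Rightarrow> ('p, 'k::field) lpoly set" where
  "lin_kernel S \<phi> = {\<Sum>s\<in>S. cscale (c s) (var s) | c.
      \<forall>r. (\<Sum>s\<in>{s\<in>S. \<phi> s = r}. c s) = 0}"

definition regular_seq :: "('p \<times> nat) set \<Rightarrow> ('p, 'k::field) lpoly set \<Rightarrow> ('p, 'k) lpoly list \<Rightarrow> bool" where
  "regular_seq S L fs \<longleftrightarrow>
     (\<forall>i<length fs. \<forall>g\<in>polyring S.
        fs ! i * g \<in> ideal_in (polyring S) (L \<union> set (take i fs)) \<longrightarrow>
        g \<in> ideal_in (polyring S) (L \<union> set (take i fs))) \<and>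
     (1 \<notin> ideal_in (polyring S) L \<longrightarrow> 1 \<notin> ideal_in (polyring S) (L \<union> set fs))"

end

theory Submission
  imports Defs
begin

lemma pm_repr:
  "(p::'a \<Rightarrow>\<^sub>0 'b::comm_monoid_add) = (\<Sum>k\<in>Poly_Mapping.keys p. Poly_Mapping.single k (Poly_Mapping.lookup p k))"
proof (rule poly_mapping_eqI)
  fix i
  show "Poly_Mapping.lookup p i = Poly_Mapping.lookup (\<Sum>k\<in>Poly_Mapping.keys p. Poly_Mapping.single k (Poly_Mapping.lookup p k)) i"
    by (cases "i \<in> Poly_Mapping.keys p")
       (auto simp: lookup_sum lookup_single when_def in_keys_iff sum.delta)
qed

lemma polyring_I: "(\<And>m. m \<in> Poly_Mapping.keys f \<Longrightarrow> Poly_Mapping.keys m \<subseteq> S) \<Longrightarrow> f \<in> polyring S"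
  by (auto simp: polyring_def)

lemma polyring_D: "f \<in> polyring S \<Longrightarrow> m \<in> Poly_Mapping.keys f \<Longrightarrow> Poly_Mapping.keys m \<subseteq> S"
  by (auto simp: polyring_def)

lemma polyring_add: "f \<in> polyring S \<Longrightarrow> g \<in> polyring S \<Longrightarrow> f + g \<in> polyring S"
proof (rule polyring_I)
  fix m assume f: "f \<in> polyring S" and g: "g \<in> polyring S" and m: "m \<in> Poly_Mapping.keys (f + g)"
  then have "m \<in> Poly_Mapping.keys f \<or> m \<in> Poly_Mapping.keys g" using keys_add[of f g] by blast
  then show "Poly_Mapping.keys m \<subseteq> S" using polyring_D[OF f] polyring_D[OF g] by blast
qed

lemma polyring_uminus: "f \<in> polyring S \<Longrightarrow> - f \<in> polyring S"
proof (rule polyring_I)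
  fix m assume f: "f \<in> polyring S" and m: "m \<in> Poly_Mapping.keys (- f)"
  then have "m \<in> Poly_Mapping.keys f" by (simp only: keys_minus)
  then show "Poly_Mapping.keys m \<subseteq> S" using polyring_D[OF f] by blast
qed

lemma polyring_diff: "f \<in> polyring S \<Longrightarrow> g \<in> polyring S \<Longrightarrow> f - g \<in> polyring S"
  using polyring_add[of f S "- g"] polyring_uminus[of g S] by simp

lemma polyring_mult: "f \<in> polyring S \<Longrightarrow> g \<in> polyring S \<Longrightarrow> f * g \<in> polyring S"
proof (rule polyring_I)
  fix m assume f: "f \<in> polyring S" and g: "g \<in> polyring S" and m: "m \<in> Poly_Mapping.keys (f * g)"
  then obtain a b where ab: "m = a + b" "a \<in> Poly_Mapping.keys f" "b \<in> Poly_Mapping.keys g"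
    using keys_mult by blast
  then show "Poly_Mapping.keys m \<subseteq> S"
    using keys_add[of a b] polyring_D[OF f] polyring_D[OF g] by blast
qed

lemma polyring_single: "Poly_Mapping.keys m \<subseteq> S \<Longrightarrow> Poly_Mapping.single m c \<in> polyring S"
  by (auto simp: polyring_def)

lemma polyring_zero: "0 \<in> polyring S"
  by (auto simp: polyring_def)

lemma polyring_one: "1 \<in> polyring S"
  by (auto simp: polyring_def)

lemma polyring_sum: "(\<And>i. i \<in> I \<Longrightarrow> f i \<in> polyring S) \<Longrightarrow> sum f I \<in> polyring S"
  by (induction I rule: infinite_finite_induct) (auto intro: polyring_add polyring_zero)

lemma polyring_var: "s \<in> S \<Longrightarrow> (var s :: ('p,'k::field) lpoly) \<in> polyring S"
  unfolding var_def by (rule polyring_single) simp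

lemma keys_sum_singles: "finite G \<Longrightarrow> Poly_Mapping.keys (\<Sum>t\<in>G. Poly_Mapping.single t (1::nat)) \<subseteq> G"
  using keys_sum[of "\<lambda>t. Poly_Mapping.single t (1::nat)" G] by auto

lemma polyring_sqmon: "finite G \<Longrightarrow> G \<subseteq> S \<Longrightarrow> (sqmon G :: ('p,'k::field) lpoly) \<in> polyring S"
  unfolding sqmon_def by (rule polyring_single) (use keys_sum_singles in blast)

lemma ideal_inI:
  "finite F \<Longrightarrow> F \<subseteq> G \<Longrightarrow> (\<And>g. g \<in> F \<Longrightarrow> a g \<in> A) \<Longrightarrow> (\<Sum>g\<in>F. a g * g) \<in> ideal_in A G"
  unfolding ideal_in_def by blast

lemma ideal_inE:
  assumes "x \<in> ideal_in A G"
  obtains F a where "finite F" "F \<subseteq> G" "\<And>g. g \<in> F \<Longrightarrow> a g \<in> A" "x = (\<Sum>g\<in>F. a g * g)"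
  using assms unfolding ideal_in_def by blast

lemma ideal_zero: "0 \<in> ideal_in A G"
  using ideal_inI[of "{}" G "\<lambda>_. 0" A] by simp

lemma ideal_gen: "g \<in> G \<Longrightarrow> 1 \<in> A \<Longrightarrow> g \<in> ideal_in A G"
  using ideal_inI[of "{g}" G "\<lambda>_. 1" A] by simp

lemma ideal_add:
  assumes x: "x \<in> ideal_in A G" and y: "y \<in> ideal_in A G"
    and Aadd: "\<And>u v. u \<in> A \<Longrightarrow> v \<in> A \<Longrightarrow> u + v \<in> A" and A0: "0 \<in> A"
  shows "x + y \<in> ideal_in A G"
proof -
  obtain F1 a1 where 1: "finite F1" "F1 \<subseteq> G" "\<And>g. g \<in> F1 \<Longrightarrow> a1 g \<in> A" "x = (\<Sum>g\<in>F1. a1 g * g)"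
    using x unfolding ideal_in_def by blast
  obtain F2 a2 where 2: "finite F2" "F2 \<subseteq> G" "\<And>g. g \<in> F2 \<Longrightarrow> a2 g \<in> A" "y = (\<Sum>g\<in>F2. a2 g * g)"
    using y unfolding ideal_in_def by blast
  define b1 where "b1 g = (if g \<in> F1 then a1 g else 0)" for g
  define b2 where "b2 g = (if g \<in> F2 then a2 g else 0)" for g
  have e1: "x = (\<Sum>g\<in>F1 \<union> F2. b1 g * g)"
    unfolding 1(4) b1_def using 1(1) 2(1)
    by (rule_tac sum.mono_neutral_cong_left) simp_all
  have e2: "y = (\<Sum>g\<in>F1 \<union> F2. b2 g * g)"
    unfolding 2(4) b2_def using 1(1) 2(1)
    by (rule_tac sum.mono_neutral_cong_left) simp_all
  have e3: "x + y = (\<Sum>g\<in>F1 \<union> F2. (b1 g + b2 g) * g)"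
    unfolding e1 e2 by (simp add: sum.distrib distrib_right)
  have "(\<Sum>g\<in>F1 \<union> F2. (b1 g + b2 g) * g) \<in> ideal_in A G"
  proof (rule ideal_inI)
    show "finite (F1 \<union> F2)" using 1(1) 2(1) by simp
    show "F1 \<union> F2 \<subseteq> G" using 1(2) 2(2) by simp
    fix g assume "g \<in> F1 \<union> F2"
    have "b1 g \<in> A" unfolding b1_def using 1(3) A0 by simp
    moreover have "b2 g \<in> A" unfolding b2_def using 2(3) A0 by simp
    ultimately show "b1 g + b2 g \<in> A" by (rule Aadd)
  qed
  then show ?thesis unfolding e3 .
qed

lemma ideal_mult:
  assumes x: "x \<in> ideal_in A G" and c: "c \<in> A"
    and Amul: "\<And>u v. u \<in> A \<Longrightarrow> v \<in> A \<Longrightarrow> u * v \<in> A"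
  shows "c * x \<in> ideal_in A G"
proof -
  obtain F a where 1: "finite F" "F \<subseteq> G" "\<And>g. g \<in> F \<Longrightarrow> a g \<in> A" "x = (\<Sum>g\<in>F. a g * g)"
    using x unfolding ideal_in_def by blast
  have "c * x = (\<Sum>g\<in>F. (c * a g) * g)"
    unfolding 1(4) by (simp add: sum_distrib_left mult.assoc)
  moreover have "(\<Sum>g\<in>F. (c * a g) * g) \<in> ideal_in A G"
    by (rule ideal_inI) (use 1 c Amul in auto)
  ultimately show ?thesis by simp
qed

lemma ideal_mono: "G \<subseteq> H \<Longrightarrow> ideal_in A G \<subseteq> ideal_in A H"
  unfolding ideal_in_def by blast

context
  fixes S :: "('p \<times> nat) set"
begin


lemma pideal_add: "x \<in> ideal_in (polyring S) G \<Longrightarrow> y \<in> ideal_in (polyring S) G \<Longrightarrow> x + y \<in> ideal_in (polyring S) G"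
  by (rule ideal_add) (auto intro: polyring_add polyring_zero)

lemma pideal_mult: "x \<in> ideal_in (polyring S) G \<Longrightarrow> c \<in> polyring S \<Longrightarrow> c * x \<in> ideal_in (polyring S) (G :: ('p,'k::field) lpoly set)"
  by (rule ideal_mult) (auto intro: polyring_mult)

lemma pideal_uminus: "x \<in> ideal_in (polyring S) G \<Longrightarrow> - x \<in> ideal_in (polyring S) (G :: ('p,'k::field) lpoly set)"
  using pideal_mult[of x G "-1"] polyring_one polyring_uminus by fastforce

lemma pideal_diff: "x \<in> ideal_in (polyring S) G \<Longrightarrow> y \<in> ideal_in (polyring S) G \<Longrightarrow> x - y \<in> ideal_in (polyring S) (G :: ('p,'k::field) lpoly set)"
  using pideal_add[of x G "- y"] pideal_uminus[of y G] by simp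

lemma pideal_gen: "g \<in> G \<Longrightarrow> g \<in> ideal_in (polyring S) G"
  by (rule ideal_gen) (auto intro: polyring_one)

lemma pideal_sum: "(\<And>i. i \<in> I \<Longrightarrow> f i \<in> ideal_in (polyring S) G) \<Longrightarrow> sum f I \<in> ideal_in (polyring S) G"
  by (induction I rule: infinite_finite_induct) (auto intro: pideal_add ideal_zero)

lemma pideal_trans:
  assumes "G \<subseteq> ideal_in (polyring S) H"
  shows "ideal_in (polyring S) G \<subseteq> ideal_in (polyring S) (H :: ('p,'k::field) lpoly set)"
proof
  fix x assume x: "x \<in> ideal_in (polyring S) G"
  obtain F a where 1: "finite F" "F \<subseteq> G" "\<And>g. g \<in> F \<Longrightarrow> a g \<in> polyring S" "x = (\<Sum>g\<in>F. a g * g)"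
    using x unfolding ideal_in_def by blast
  show "x \<in> ideal_in (polyring S) H"
    unfolding 1(4)
  proof (rule pideal_sum)
    fix g assume g: "g \<in> F"
    then have "g \<in> ideal_in (polyring S) H" using 1(2) assms by blast
    then show "a g * g \<in> ideal_in (polyring S) H" using 1(3)[OF g] by (rule pideal_mult)
  qed
qed

lemma pideal_sub: "G \<subseteq> polyring S \<Longrightarrow> ideal_in (polyring S) G \<subseteq> polyring S"
proof
  fix x assume G: "G \<subseteq> polyring S" and x: "x \<in> ideal_in (polyring S) G"
  obtain F a where 1: "finite F" "F \<subseteq> G" "\<And>g. g \<in> F \<Longrightarrow> a g \<in> polyring S" "x = (\<Sum>g\<in>F. a g * g)"
    using x unfolding ideal_in_def by blast
  show "x \<in> polyring S"
    unfolding 1(4)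
  proof (rule polyring_sum)
    fix g assume "g \<in> F"
    then show "a g * g \<in> polyring S" using 1(2,3) G by (intro polyring_mult) blast+
  qed
qed

end

definition lext :: "('a \<Rightarrow> 'b::comm_monoid_add \<Rightarrow> 'c::comm_monoid_add) \<Rightarrow> ('a \<Rightarrow>\<^sub>0 'b) \<Rightarrow> 'c" where
  "lext h p = (\<Sum>k\<in>Poly_Mapping.keys p. h k (Poly_Mapping.lookup p k))"

lemma lext_add:
  assumes "\<And>k. h k 0 = 0" "\<And>k a b. h k (a + b) = h k a + h k b"
  shows "lext h (p + q) = lext h p + lext h q"
  unfolding lext_def by (rule setsum_keys_plus_distrib) (use assms in auto)

lemma lext_zero: "lext h 0 = 0"
  unfolding lext_def by simp

lemma lext_single:
  assumes "\<And>k. h k 0 = 0"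
  shows "lext h (Poly_Mapping.single k v) = h k v"
  unfolding lext_def using assms by (cases "v = 0") simp_all

lemma lext_sum:
  assumes "\<And>k. h k 0 = 0" "\<And>k a b. h k (a + b) = h k a + h k b"
  shows "lext h (sum f I) = (\<Sum>i\<in>I. lext h (f i))"
proof (induction I rule: infinite_finite_induct)
  case (infinite I) then show ?case by (simp add: lext_zero)
next
  case empty then show ?case by (simp add: lext_zero)
next
  case (insert x F) then show ?case by (simp add: lext_add[OF assms])
qed

definition ren :: "('a \<Rightarrow> 'a) \<Rightarrow> ('a \<Rightarrow>\<^sub>0 nat) \<Rightarrow> ('a \<Rightarrow>\<^sub>0 nat)" where
  "ren \<rho> = lext (\<lambda>v n. Poly_Mapping.single (\<rho> v) n)"

definition subst :: "('a \<Rightarrow> 'a) \<Rightarrow> (('a \<Rightarrow>\<^sub>0 nat) \<Rightarrow>\<^sub>0 'k::comm_ring_1) \<Rightarrow> (('a \<Rightarrow>\<^sub>0 nat) \<Rightarrow>\<^sub>0 'k)" where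
  "subst \<rho> = lext (\<lambda>m c. Poly_Mapping.single (ren \<rho> m) c)"

lemma ren_add: "ren \<rho> (m + n) = ren \<rho> m + ren \<rho> n"
  unfolding ren_def by (rule lext_add) (simp_all add: single_add)

lemma ren_single: "ren \<rho> (Poly_Mapping.single v k) = Poly_Mapping.single (\<rho> v) k"
  unfolding ren_def by (rule lext_single) simp

lemma ren_sum: "ren \<rho> (sum f I) = (\<Sum>i\<in>I. ren \<rho> (f i))"
  unfolding ren_def by (rule lext_sum) (simp_all add: single_add)

lemma ren_expand: "ren \<rho> m = (\<Sum>v\<in>Poly_Mapping.keys m. Poly_Mapping.single (\<rho> v) (Poly_Mapping.lookup m v))"
  unfolding ren_def lext_def ..

lemma subst_add: "subst \<rho> (f + g) = subst \<rho> f + subst \<rho> g"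
  unfolding subst_def by (rule lext_add) (simp_all add: single_add)

lemma subst_zero: "subst \<rho> 0 = 0"
  unfolding subst_def by (rule lext_zero)

lemma subst_single: "subst \<rho> (Poly_Mapping.single m c) = Poly_Mapping.single (ren \<rho> m) c"
  unfolding subst_def by (rule lext_single) simp

lemma subst_sum: "subst \<rho> (sum f I) = (\<Sum>i\<in>I. subst \<rho> (f i))"
  unfolding subst_def by (rule lext_sum) (simp_all add: single_add)

lemma subst_expand: "subst \<rho> f = (\<Sum>m\<in>Poly_Mapping.keys f. Poly_Mapping.single (ren \<rho> m) (Poly_Mapping.lookup f m))"
  unfolding subst_def lext_def ..

lemma subst_uminus: "subst \<rho> (- f) = - subst \<rho> f"
proof -
  have "subst \<rho> (- f) + subst \<rho> f = 0" using subst_add[of \<rho> "- f" f] by (simp add: subst_zero)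
  then show ?thesis by (metis eq_neg_iff_add_eq_0)
qed

lemma subst_diff: "subst \<rho> (f - g) = subst \<rho> f - subst \<rho> g"
  using subst_add[of \<rho> f "- g"] by (simp add: subst_uminus)

lemma subst_mult: "subst \<rho> (f * g) = subst \<rho> f * subst \<rho> g"
proof -
  have f: "f = (\<Sum>m\<in>Poly_Mapping.keys f. Poly_Mapping.single m (Poly_Mapping.lookup f m))"
    by (rule pm_repr)
  have g: "g = (\<Sum>n\<in>Poly_Mapping.keys g. Poly_Mapping.single n (Poly_Mapping.lookup g n))"
    by (rule pm_repr)
  have "f * g = (\<Sum>m\<in>Poly_Mapping.keys f. Poly_Mapping.single m (Poly_Mapping.lookup f m)) *
      (\<Sum>n\<in>Poly_Mapping.keys g. Poly_Mapping.single n (Poly_Mapping.lookup g n))"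
    by (rule arg_cong2[where f="(*)", OF f g])
  also have "\<dots> = (\<Sum>m\<in>Poly_Mapping.keys f. \<Sum>n\<in>Poly_Mapping.keys g.
      Poly_Mapping.single m (Poly_Mapping.lookup f m) * Poly_Mapping.single n (Poly_Mapping.lookup g n))"
    by (rule sum_product)
  finally have fg: "f * g = (\<Sum>m\<in>Poly_Mapping.keys f. \<Sum>n\<in>Poly_Mapping.keys g.
      Poly_Mapping.single m (Poly_Mapping.lookup f m) * Poly_Mapping.single n (Poly_Mapping.lookup g n))" .
  have "subst \<rho> (f * g) = (\<Sum>m\<in>Poly_Mapping.keys f. \<Sum>n\<in>Poly_Mapping.keys g.
      Poly_Mapping.single (ren \<rho> m) (Poly_Mapping.lookup f m) * Poly_Mapping.single (ren \<rho> n) (Poly_Mapping.lookup g n))"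
    unfolding fg by (simp add: subst_sum mult_single subst_single ren_add)
  also have "\<dots> = (\<Sum>m\<in>Poly_Mapping.keys f. Poly_Mapping.single (ren \<rho> m) (Poly_Mapping.lookup f m)) *
      (\<Sum>n\<in>Poly_Mapping.keys g. Poly_Mapping.single (ren \<rho> n) (Poly_Mapping.lookup g n))"
    by (rule sum_product[symmetric])
  also have "\<dots> = subst \<rho> f * subst \<rho> g"
    unfolding subst_expand[of \<rho> f] subst_expand[of \<rho> g] ..
  finally show ?thesis .
qed

lemma subst_var: "subst \<rho> (var u :: ('p,'k::field) lpoly) = var (\<rho> u)"
  unfolding var_def by (simp add: subst_single ren_single)

lemma subst_sqmon: "subst \<rho> (sqmon G :: ('p,'k::field) lpoly) = Poly_Mapping.single (\<Sum>t\<in>G. Poly_Mapping.single (\<rho> t) 1) 1"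
  unfolding sqmon_def by (simp add: subst_single ren_sum ren_single)

lemma keys_ren: "Poly_Mapping.keys (ren \<rho> m) \<subseteq> \<rho> ` Poly_Mapping.keys m"
proof
  fix x assume "x \<in> Poly_Mapping.keys (ren \<rho> m)"
  then have "x \<in> (\<Union>v\<in>Poly_Mapping.keys m. Poly_Mapping.keys (Poly_Mapping.single (\<rho> v) (Poly_Mapping.lookup m v)))"
    unfolding ren_expand using keys_sum[of "\<lambda>v. Poly_Mapping.single (\<rho> v) (Poly_Mapping.lookup m v)" "Poly_Mapping.keys m"] by blast
  then obtain v where v: "v \<in> Poly_Mapping.keys m" and x: "x \<in> Poly_Mapping.keys (Poly_Mapping.single (\<rho> v) (Poly_Mapping.lookup m v))"
    by blast
  have "Poly_Mapping.lookup m v \<noteq> 0" using v in_keys_iff by metis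
  then have "x = \<rho> v" using x by simp
  then show "x \<in> \<rho> ` Poly_Mapping.keys m" using v by blast
qed

lemma polyring_subst:
  assumes f: "f \<in> polyring S" and rS: "\<And>u. u \<in> S \<Longrightarrow> \<rho> u \<in> S"
  shows "subst \<rho> (f :: ('p,'k::field) lpoly) \<in> polyring S"
  unfolding subst_expand
proof (rule polyring_sum)
  fix m assume m: "m \<in> Poly_Mapping.keys f"
  have "Poly_Mapping.keys (ren \<rho> m) \<subseteq> S"
    using keys_ren[of \<rho> m] polyring_D[OF f m] rS by blast
  then show "Poly_Mapping.single (ren \<rho> m) (Poly_Mapping.lookup f m) \<in> polyring S"
    by (rule polyring_single)
qed

lemma keys_single_sub: "Poly_Mapping.keys (Poly_Mapping.single w k) \<subseteq> {w}"
  by simp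

lemma keys_sum_single_sub:
  "Poly_Mapping.keys (\<Sum>v\<in>V. Poly_Mapping.single (r v) (e v :: nat)) \<subseteq> r ` V"
proof
  fix x assume "x \<in> Poly_Mapping.keys (\<Sum>v\<in>V. Poly_Mapping.single (r v) (e v))"
  then have "x \<in> (\<Union>v\<in>V. Poly_Mapping.keys (Poly_Mapping.single (r v) (e v)))"
    using keys_sum[of "\<lambda>v. Poly_Mapping.single (r v) (e v)" V] by blast
  then obtain v where v: "v \<in> V" and "x \<in> Poly_Mapping.keys (Poly_Mapping.single (r v) (e v))" by blast
  then have "x = r v" using keys_single_sub[of "r v" "e v"] by blast
  then show "x \<in> r ` V" using v by blast
qed

lemma diff_split: "(x::'a::ab_group_add) - z = (x - y) + (y - z)"
  by simp

lemma ring_id: "(x::'a::comm_ring) = z * w \<Longrightarrow> y = z' * y' \<Longrightarrow> x - y = z * (w - y') + y' * (z - z')"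
  by (simp add: algebra_simps)

context
  fixes S :: "('p \<times> nat) set" and \<rho> :: "'p \<times> nat \<Rightarrow> 'p \<times> nat" and X :: "('p, 'k::field) lpoly set"
  assumes rS: "\<And>u. u \<in> S \<Longrightarrow> \<rho> u \<in> S"
    and dX: "\<And>u. u \<in> S \<Longrightarrow> var u - var (\<rho> u) \<in> ideal_in (polyring S) X"
begin

lemma pow_diff_ideal:
  assumes u: "u \<in> S"
  shows "Poly_Mapping.single (Poly_Mapping.single u k) 1 - Poly_Mapping.single (Poly_Mapping.single (\<rho> u) k) (1::'k)
    \<in> ideal_in (polyring S) X"
proof (induction k)
  case 0
  then show ?case by (simp only: single_zero diff_self ideal_zero)
next
  case (Suc k)
  let ?X = "\<lambda>k. Poly_Mapping.single (Poly_Mapping.single u k) (1::'k)"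
  let ?Y = "\<lambda>k. Poly_Mapping.single (Poly_Mapping.single (\<rho> u) k) (1::'k)"
  have hx: "?X (Suc k) = var u * ?X k"
    unfolding var_def mult_single by (simp add: single_add[symmetric])
  have hy: "?Y (Suc k) = var (\<rho> u) * ?Y k"
    unfolding var_def mult_single by (simp add: single_add[symmetric])
  have eq: "?X (Suc k) - ?Y (Suc k) = var u * (?X k - ?Y k) + ?Y k * (var u - var (\<rho> u))"
    by (rule ring_id[OF hx hy])
  have yA: "?Y k \<in> polyring S"
    by (rule polyring_single) (use rS[OF u] keys_single_sub[of "\<rho> u" k] in blast)
  show ?case unfolding eq
  proof (rule pideal_add)
    show "var u * (?X k - ?Y k) \<in> ideal_in (polyring S) X"
      by (rule pideal_mult[OF Suc polyring_var[OF u]])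
    show "?Y k * (var u - var (\<rho> u)) \<in> ideal_in (polyring S) X"
      by (rule pideal_mult[OF dX[OF u] yA])
  qed
qed

lemma mon_diff_ideal:
  assumes "finite V" "V \<subseteq> S"
  shows "Poly_Mapping.single (\<Sum>v\<in>V. Poly_Mapping.single v (e v)) c
       - Poly_Mapping.single (\<Sum>v\<in>V. Poly_Mapping.single (\<rho> v) (e v)) (c::'k) \<in> ideal_in (polyring S) X"
  using assms
proof (induction V rule: finite_induct)
  case empty
  then show ?case by (simp add: ideal_zero)
next
  case (insert w V)
  define a where "a = Poly_Mapping.single w (e w)"
  define b where "b = Poly_Mapping.single (\<rho> w) (e w)"
  define M where "M = (\<Sum>v\<in>V. Poly_Mapping.single v (e v))"
  define M' where "M' = (\<Sum>v\<in>V. Poly_Mapping.single (\<rho> v) (e v))"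
  have s1: "(\<Sum>v\<in>insert w V. Poly_Mapping.single v (e v)) = a + M"
    unfolding a_def M_def by (rule sum.insert[OF insert(1,2)])
  have s2: "(\<Sum>v\<in>insert w V. Poly_Mapping.single (\<rho> v) (e v)) = b + M'"
    unfolding b_def M'_def by (rule sum.insert[OF insert(1,2)])
  have m1: "Poly_Mapping.single a 1 * Poly_Mapping.single M c = Poly_Mapping.single (a + M) c"
    by (simp only: mult_single mult_1_left)
  have m2: "Poly_Mapping.single a 1 * Poly_Mapping.single M' c = Poly_Mapping.single (a + M') c"
    by (simp only: mult_single mult_1_left)
  have m3: "Poly_Mapping.single M' c * Poly_Mapping.single a 1 = Poly_Mapping.single (a + M') c"
    by (simp only: mult_single mult_1_right add.commute)
  have m4: "Poly_Mapping.single M' c * Poly_Mapping.single b 1 = Poly_Mapping.single (b + M') c"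
    by (simp only: mult_single mult_1_right add.commute)
  have eq: "Poly_Mapping.single (a + M) c - Poly_Mapping.single (b + M') c
     = Poly_Mapping.single a 1 * (Poly_Mapping.single M c - Poly_Mapping.single M' c)
       + Poly_Mapping.single M' c * (Poly_Mapping.single a (1::'k) - Poly_Mapping.single b 1)"
    unfolding right_diff_distrib m1 m2 m3 m4 by (rule diff_split)
  have wS: "w \<in> S" using insert(4) by blast
  have aA: "Poly_Mapping.single a (1::'k) \<in> polyring S"
    by (rule polyring_single) (use wS keys_single_sub[of w "e w"] in \<open>unfold a_def, blast\<close>)
  have M'A: "Poly_Mapping.single M' c \<in> polyring S"
    by (rule polyring_single) (use insert(4) rS keys_sum_single_sub[of \<rho> e V] in \<open>unfold M'_def, blast\<close>)
  have IH: "Poly_Mapping.single M c - Poly_Mapping.single M' c \<in> ideal_in (polyring S) X"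
    unfolding M_def M'_def using insert by blast
  have ab: "Poly_Mapping.single a (1::'k) - Poly_Mapping.single b 1 \<in> ideal_in (polyring S) X"
    unfolding a_def b_def by (rule pow_diff_ideal[OF wS])
  show ?case unfolding s1 s2 eq
    by (rule pideal_add[OF pideal_mult[OF IH aA] pideal_mult[OF ab M'A]])
qed

lemma single_ren_diff_ideal:
  assumes "Poly_Mapping.keys m \<subseteq> S"
  shows "Poly_Mapping.single m c - Poly_Mapping.single (ren \<rho> m) (c::'k) \<in> ideal_in (polyring S) X"
proof -
  have "m = (\<Sum>v\<in>Poly_Mapping.keys m. Poly_Mapping.single v (Poly_Mapping.lookup m v))"
    by (rule pm_repr)
  then have e: "Poly_Mapping.single m c = Poly_Mapping.single (\<Sum>v\<in>Poly_Mapping.keys m. Poly_Mapping.single v (Poly_Mapping.lookup m v)) c"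
    by (rule arg_cong)
  show ?thesis unfolding e ren_expand
    by (rule mon_diff_ideal) (use assms in simp_all)
qed

lemma subst_diff_ideal:
  assumes f: "f \<in> polyring S"
  shows "f - subst \<rho> f \<in> ideal_in (polyring S) X"
proof -
  have "f = (\<Sum>m\<in>Poly_Mapping.keys f. Poly_Mapping.single m (Poly_Mapping.lookup f m))"
    by (rule pm_repr)
  then have "f - subst \<rho> f = (\<Sum>m\<in>Poly_Mapping.keys f. Poly_Mapping.single m (Poly_Mapping.lookup f m))
     - (\<Sum>m\<in>Poly_Mapping.keys f. Poly_Mapping.single (ren \<rho> m) (Poly_Mapping.lookup f m))"
    unfolding subst_expand by (rule arg_cong2[where f="(-)"]) (rule refl)
  also have "\<dots> = (\<Sum>m\<in>Poly_Mapping.keys f. Poly_Mapping.single m (Poly_Mapping.lookup f m)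
     - Poly_Mapping.single (ren \<rho> m) (Poly_Mapping.lookup f m))"
    by (rule sum_subtractf[symmetric])
  finally have e: "f - subst \<rho> f = (\<Sum>m\<in>Poly_Mapping.keys f. Poly_Mapping.single m (Poly_Mapping.lookup f m)
     - Poly_Mapping.single (ren \<rho> m) (Poly_Mapping.lookup f m))" .
  show ?thesis unfolding e
    by (rule pideal_sum, rule single_ren_diff_ideal, rule polyring_D[OF f])
qed

end

lemma lookup_single_mult_sum:
  "Poly_Mapping.lookup (Poly_Mapping.single e c * h) n
     = (\<Sum>m\<in>Poly_Mapping.keys h. (c * Poly_Mapping.lookup h m when e + m = n))"
proof -
  have "h = (\<Sum>m\<in>Poly_Mapping.keys h. Poly_Mapping.single m (Poly_Mapping.lookup h m))"
    by (rule pm_repr)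
  then have "Poly_Mapping.single e c * h = Poly_Mapping.single e c * (\<Sum>m\<in>Poly_Mapping.keys h. Poly_Mapping.single m (Poly_Mapping.lookup h m))"
    by (rule arg_cong)
  also have "\<dots> = (\<Sum>m\<in>Poly_Mapping.keys h. Poly_Mapping.single (e + m) (c * Poly_Mapping.lookup h m))"
    by (simp only: sum_distrib_left mult_single)
  finally show ?thesis
    by (simp only: lookup_sum lookup_single)
qed

lemma lookup_single_mult_shift:
  fixes h :: "('a \<Rightarrow>\<^sub>0 nat) \<Rightarrow>\<^sub>0 'k::field"
  shows "Poly_Mapping.lookup (Poly_Mapping.single e c * h) (e + m) = c * Poly_Mapping.lookup h m"
proof -
  have "(\<Sum>m'\<in>Poly_Mapping.keys h. (c * Poly_Mapping.lookup h m' when e + m' = e + m))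
     = (\<Sum>m'\<in>Poly_Mapping.keys h. (if m' = m then c * Poly_Mapping.lookup h m' else 0))"
    by (rule sum.cong) (simp_all only: refl when_def add_left_cancel)
  also have "\<dots> = c * Poly_Mapping.lookup h m"
    by (cases "m \<in> Poly_Mapping.keys h") (simp_all add: sum.delta' in_keys_iff)
  finally show ?thesis unfolding lookup_single_mult_sum .
qed

lemma lookup_single_mult_nz:
  fixes h :: "('a \<Rightarrow>\<^sub>0 nat) \<Rightarrow>\<^sub>0 'k::field"
  assumes "Poly_Mapping.lookup (Poly_Mapping.single e c * h) n \<noteq> 0"
  shows "\<exists>m. n = e + m \<and> m \<in> Poly_Mapping.keys h"
proof (rule ccontr)
  assume a: "\<not> (\<exists>m. n = e + m \<and> m \<in> Poly_Mapping.keys h)"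
  have "(\<Sum>m\<in>Poly_Mapping.keys h. (c * Poly_Mapping.lookup h m when e + m = n)) = 0"
  proof (rule sum.neutral, rule ballI)
    fix m assume "m \<in> Poly_Mapping.keys h"
    then have "e + m \<noteq> n" using a by blast
    then show "(c * Poly_Mapping.lookup h m when e + m = n) = 0" by (simp only: when_def if_False)
  qed
  then show False using assms unfolding lookup_single_mult_sum by blast
qed

definition Mon :: "('a \<Rightarrow>\<^sub>0 nat) set \<Rightarrow> ('a \<Rightarrow>\<^sub>0 nat) set" where
  "Mon E = {n. \<exists>e\<in>E. \<forall>v. Poly_Mapping.lookup e v \<le> Poly_Mapping.lookup n v}"

lemma MonI: "e \<in> E \<Longrightarrow> (\<And>v. Poly_Mapping.lookup e v \<le> Poly_Mapping.lookup n v) \<Longrightarrow> n \<in> Mon E"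
  unfolding Mon_def by blast

lemma keys_mgens_ideal:
  assumes f: "f \<in> ideal_in A ((\<lambda>e. Poly_Mapping.single e (1::'k::field)) ` E)"
    and n: "n \<in> Poly_Mapping.keys f"
  shows "n \<in> Mon E"
proof -
  obtain F a where 1: "finite F" "F \<subseteq> (\<lambda>e. Poly_Mapping.single e (1::'k)) ` E" "f = (\<Sum>g\<in>F. a g * g)"
    using f unfolding ideal_in_def by blast
  have "n \<in> (\<Union>g\<in>F. Poly_Mapping.keys (a g * g))"
    using n keys_sum[of "\<lambda>g. a g * g" F] unfolding 1(3) by blast
  then obtain g where g: "g \<in> F" and ng: "n \<in> Poly_Mapping.keys (a g * g)" by blast
  obtain e where e: "e \<in> E" and ge: "g = Poly_Mapping.single e 1" using g 1(2) by blast
  obtain k b where kb: "n = k + b" "b \<in> Poly_Mapping.keys g"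
    using ng keys_mult[of "a g" g] by blast
  have "b = e" using kb(2) unfolding ge by simp
  show ?thesis
  proof (rule MonI[OF e])
    fix v show "Poly_Mapping.lookup e v \<le> Poly_Mapping.lookup n v"
      unfolding kb(1) \<open>b = e\<close> lookup_add by simp
  qed
qed

lemma mon_single_in:
  assumes n: "n \<in> Mon E" and nS: "Poly_Mapping.keys n \<subseteq> S"
  shows "Poly_Mapping.single n c \<in> ideal_in (polyring S) ((\<lambda>e. Poly_Mapping.single e (1::'k::field)) ` E)"
proof -
  obtain e where e: "e \<in> E" and le: "\<And>v. Poly_Mapping.lookup e v \<le> Poly_Mapping.lookup n v"
    using n unfolding Mon_def by blast
  have ne: "n = (n - e) + e"
  proof (rule poly_mapping_eqI)
    fix v show "Poly_Mapping.lookup n v = Poly_Mapping.lookup (n - e + e) v"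
      unfolding lookup_add lookup_minus using le[of v] by simp
  qed
  have sn: "Poly_Mapping.single n c = Poly_Mapping.single (n - e) c * Poly_Mapping.single e (1::'k)"
    unfolding mult_single mult_1_right by (subst ne, rule refl)
  have "Poly_Mapping.keys (n - e) \<subseteq> Poly_Mapping.keys n"
  proof
    fix v assume "v \<in> Poly_Mapping.keys (n - e)"
    then have "Poly_Mapping.lookup (n - e) v \<noteq> 0" using in_keys_iff by metis
    then have "Poly_Mapping.lookup n v \<noteq> 0" unfolding lookup_minus by simp
    then show "v \<in> Poly_Mapping.keys n" using in_keys_iff by metis
  qed
  then have A: "Poly_Mapping.single (n - e) c \<in> polyring S"
    using nS by (intro polyring_single) blast
  have "Poly_Mapping.single e (1::'k) \<in> ideal_in (polyring S) ((\<lambda>e. Poly_Mapping.single e (1::'k)) ` E)"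
    by (rule pideal_gen) (use e in blast)
  then show ?thesis unfolding sn by (rule pideal_mult[OF _ A])
qed

lemma mon_ideal_I:
  assumes f: "f \<in> polyring S" and keys: "\<And>n. n \<in> Poly_Mapping.keys f \<Longrightarrow> n \<in> Mon E"
  shows "f \<in> ideal_in (polyring S) ((\<lambda>e. Poly_Mapping.single e (1::'k::field)) ` E)"
proof -
  have "f = (\<Sum>m\<in>Poly_Mapping.keys f. Poly_Mapping.single m (Poly_Mapping.lookup f m))"
    by (rule pm_repr)
  also have "\<dots> \<in> ideal_in (polyring S) ((\<lambda>e. Poly_Mapping.single e (1::'k::field)) ` E)"
    by (rule pideal_sum, rule mon_single_in[OF keys polyring_D[OF f]])
  finally show ?thesis .
qed

lemma exists_key: "(h::'a \<Rightarrow>\<^sub>0 'b::zero) \<noteq> 0 \<Longrightarrow> \<exists>k. k \<in> Poly_Mapping.keys h"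
proof (rule ccontr)
  assume "h \<noteq> 0" "\<not> (\<exists>k. k \<in> Poly_Mapping.keys h)"
  then have "\<And>k. Poly_Mapping.lookup h k = 0" using in_keys_iff by metis
  then have "h = 0" by (intro poly_mapping_eqI) simp
  then show False using \<open>h \<noteq> 0\<close> by blast
qed

lemma nzd_zero:
  fixes h :: "('p, 'k::field) lpoly" and E :: "(('p \<times> nat) \<Rightarrow>\<^sub>0 nat) set"
  assumes yz: "y \<noteq> z"
    and meet: "\<And>n1 n2 n. n1 \<in> Mon E \<Longrightarrow> n2 \<in> Mon E
       \<Longrightarrow> (\<And>v. v \<noteq> y \<Longrightarrow> v \<noteq> z \<Longrightarrow> Poly_Mapping.lookup n1 v = Poly_Mapping.lookup n2 v)
       \<Longrightarrow> (\<And>v. min (Poly_Mapping.lookup n1 v) (Poly_Mapping.lookup n2 v) \<le> Poly_Mapping.lookup n v)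
       \<Longrightarrow> n \<in> Mon E"
    and out: "\<And>n. n \<in> Poly_Mapping.keys h \<Longrightarrow> n \<notin> Mon E"
    and inn: "\<And>n. n \<in> Poly_Mapping.keys ((var y - var z) * h) \<Longrightarrow> n \<in> Mon E"
  shows "h = 0"
proof (rule ccontr)
  assume "h \<noteq> 0"
  then obtain m0 where m0: "m0 \<in> Poly_Mapping.keys h" using exists_key by blast
  define Q where "Q = {m \<in> Poly_Mapping.keys h. (\<forall>v. v \<noteq> y \<longrightarrow> v \<noteq> z \<longrightarrow> Poly_Mapping.lookup m v = Poly_Mapping.lookup m0 v)
     \<and> Poly_Mapping.lookup m y + Poly_Mapping.lookup m z = Poly_Mapping.lookup m0 y + Poly_Mapping.lookup m0 z}"
  have finQ: "finite Q" unfolding Q_def by simp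
  have m0Q: "m0 \<in> Q" unfolding Q_def using m0 by blast
  define ly where "ly m = Poly_Mapping.lookup m y" for m :: "('p \<times> nat) \<Rightarrow>\<^sub>0 nat"
  have neQ: "ly ` Q \<noteq> {}" using m0Q by blast
  obtain mh where mhQ: "mh \<in> Q" and mhv: "ly mh = Max (ly ` Q)"
    using Max_in[OF finite_imageI[OF finQ] neQ] by (metis imageE)
  have hmax: "\<And>m. m \<in> Q \<Longrightarrow> ly m \<le> ly mh"
    unfolding mhv using finQ by simp
  obtain ml where mlQ: "ml \<in> Q" and mlv: "ly ml = Min (ly ` Q)"
    using Min_in[OF finite_imageI[OF finQ] neQ] by (metis imageE)
  have hmin: "\<And>m. m \<in> Q \<Longrightarrow> ly ml \<le> ly m"
    unfolding mlv using finQ by simp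
  define ey where "ey = Poly_Mapping.single y (1::nat)"
  define ez where "ez = Poly_Mapping.single z (1::nat)"
  have vy: "var y = Poly_Mapping.single ey (1::'k)" unfolding var_def ey_def ..
  have vz: "var z = Poly_Mapping.single ez (1::'k)" unfolding var_def ez_def ..
  have ley: "\<And>v. Poly_Mapping.lookup ey v = (if v = y then 1 else 0)"
    unfolding ey_def by (simp add: lookup_single when_def)
  have lez: "\<And>v. Poly_Mapping.lookup ez v = (if v = z then 1 else 0)"
    unfolding ez_def by (simp add: lookup_single when_def)
  have mhk: "mh \<in> Poly_Mapping.keys h" and mlk: "ml \<in> Poly_Mapping.keys h"
    using mhQ mlQ unfolding Q_def by blast+
  have mhe: "\<And>v. v \<noteq> y \<Longrightarrow> v \<noteq> z \<Longrightarrow> Poly_Mapping.lookup mh v = Poly_Mapping.lookup m0 v"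
    and mhs: "Poly_Mapping.lookup mh y + Poly_Mapping.lookup mh z = Poly_Mapping.lookup m0 y + Poly_Mapping.lookup m0 z"
    using mhQ unfolding Q_def by blast+
  have mle: "\<And>v. v \<noteq> y \<Longrightarrow> v \<noteq> z \<Longrightarrow> Poly_Mapping.lookup ml v = Poly_Mapping.lookup m0 v"
    and mls: "Poly_Mapping.lookup ml y + Poly_Mapping.lookup ml z = Poly_Mapping.lookup m0 y + Poly_Mapping.lookup m0 z"
    using mlQ unfolding Q_def by blast+
  have c2: "Poly_Mapping.lookup (var z * h) (ey + mh) = 0"
  proof (rule ccontr)
    assume "Poly_Mapping.lookup (var z * h) (ey + mh) \<noteq> 0"
    then obtain m where m: "ey + mh = ez + m" "m \<in> Poly_Mapping.keys h"
      unfolding vz using lookup_single_mult_nz by blast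
    have pt: "\<And>v. Poly_Mapping.lookup ey v + Poly_Mapping.lookup mh v = Poly_Mapping.lookup ez v + Poly_Mapping.lookup m v"
      using m(1) by (metis lookup_add)
    have my: "Poly_Mapping.lookup m y = Poly_Mapping.lookup mh y + 1"
      using pt[of y] yz unfolding ley lez by simp
    have mz: "Poly_Mapping.lookup mh z = Poly_Mapping.lookup m z + 1"
      using pt[of z] yz unfolding ley lez by simp
    have mo: "\<And>v. v \<noteq> y \<Longrightarrow> v \<noteq> z \<Longrightarrow> Poly_Mapping.lookup m v = Poly_Mapping.lookup m0 v"
    proof -
      fix v assume "v \<noteq> y" "v \<noteq> z"
      then show "Poly_Mapping.lookup m v = Poly_Mapping.lookup m0 v"
        using pt[of v] mhe[of v] unfolding ley lez by simp
    qed
    have "m \<in> Q" unfolding Q_def using m(2) mo my mz mhs by simp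
    then have "ly m \<le> ly mh" by (rule hmax)
    then show False using my unfolding ly_def by simp
  qed
  have "Poly_Mapping.lookup ((var y - var z) * h) (ey + mh) = Poly_Mapping.lookup h mh"
    unfolding left_diff_distrib lookup_minus c2 unfolding vy lookup_single_mult_shift by simp
  then have "ey + mh \<in> Poly_Mapping.keys ((var y - var z) * h)"
    using mhk in_keys_iff by metis
  then have n1: "ey + mh \<in> Mon E" by (rule inn)
  have c3: "Poly_Mapping.lookup (var y * h) (ez + ml) = 0"
  proof (rule ccontr)
    assume "Poly_Mapping.lookup (var y * h) (ez + ml) \<noteq> 0"
    then obtain m where m: "ez + ml = ey + m" "m \<in> Poly_Mapping.keys h"
      unfolding vy using lookup_single_mult_nz by blast
    have pt: "\<And>v. Poly_Mapping.lookup ez v + Poly_Mapping.lookup ml v = Poly_Mapping.lookup ey v + Poly_Mapping.lookup m v"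
      using m(1) by (metis lookup_add)
    have my: "Poly_Mapping.lookup ml y = Poly_Mapping.lookup m y + 1"
      using pt[of y] yz unfolding ley lez by simp
    have mz: "Poly_Mapping.lookup m z = Poly_Mapping.lookup ml z + 1"
      using pt[of z] yz unfolding ley lez by simp
    have mo: "\<And>v. v \<noteq> y \<Longrightarrow> v \<noteq> z \<Longrightarrow> Poly_Mapping.lookup m v = Poly_Mapping.lookup m0 v"
    proof -
      fix v assume "v \<noteq> y" "v \<noteq> z"
      then show "Poly_Mapping.lookup m v = Poly_Mapping.lookup m0 v"
        using pt[of v] mle[of v] unfolding ley lez by simp
    qed
    have "m \<in> Q" unfolding Q_def using m(2) mo my mz mls by simp
    then have "ly ml \<le> ly m" by (rule hmin)
    then show False using my unfolding ly_def by simp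
  qed
  have "Poly_Mapping.lookup ((var y - var z) * h) (ez + ml) = - Poly_Mapping.lookup h ml"
    unfolding left_diff_distrib lookup_minus c3 unfolding vz lookup_single_mult_shift by simp
  then have "ez + ml \<in> Poly_Mapping.keys ((var y - var z) * h)"
    using mlk in_keys_iff neg_equal_0_iff_equal by metis
  then have n2: "ez + ml \<in> Mon E" by (rule inn)
  have "ml \<in> Mon E"
  proof (rule meet[OF n1 n2])
    fix v assume "v \<noteq> y" "v \<noteq> z"
    then show "Poly_Mapping.lookup (ey + mh) v = Poly_Mapping.lookup (ez + ml) v"
      unfolding lookup_add ley lez using mhe[of v] mle[of v] by simp
  next
    fix v
    have hl: "ly ml \<le> ly mh" using hmin[OF mhQ] .
    show "min (Poly_Mapping.lookup (ey + mh) v) (Poly_Mapping.lookup (ez + ml) v) \<le> Poly_Mapping.lookup ml v"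
    proof (cases "v = y")
      case True then show ?thesis unfolding lookup_add ley lez using yz by simp
    next
      case False note vy' = this
      show ?thesis
      proof (cases "v = z")
        case True then show ?thesis unfolding lookup_add ley lez using vy' hl mhs mls unfolding ly_def by simp
      next
        case False then show ?thesis unfolding lookup_add ley lez using vy' mhe[of v] mle[of v] by simp
      qed
    qed
  qed
  then show False using out[OF mlk] by blast
qed


lemma nzd_mon:
  fixes h :: "('p, 'k::field) lpoly" and E :: "(('p \<times> nat) \<Rightarrow>\<^sub>0 nat) set"
  assumes yz: "y \<noteq> z" and yS: "y \<in> S" and zS: "z \<in> S"
    and meet: "\<And>n1 n2 n. n1 \<in> Mon E \<Longrightarrow> n2 \<in> Mon E
       \<Longrightarrow> (\<And>v. v \<noteq> y \<Longrightarrow> v \<noteq> z \<Longrightarrow> Poly_Mapping.lookup n1 v = Poly_Mapping.lookup n2 v)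
       \<Longrightarrow> (\<And>v. min (Poly_Mapping.lookup n1 v) (Poly_Mapping.lookup n2 v) \<le> Poly_Mapping.lookup n v)
       \<Longrightarrow> n \<in> Mon E"
    and h: "h \<in> polyring S"
    and prod: "(var y - var z) * h \<in> ideal_in (polyring S) ((\<lambda>e. Poly_Mapping.single e (1::'k)) ` E)"
  shows "h \<in> ideal_in (polyring S) ((\<lambda>e. Poly_Mapping.single e (1::'k)) ` E)"
proof -
  define hin where "hin = Poly_Mapping.mapp (\<lambda>n c. if n \<in> Mon E then c else 0) h"
  define hout where "hout = Poly_Mapping.mapp (\<lambda>n c. if n \<in> Mon E then 0 else c) h"
  have split: "h = hin + hout"
  proof (rule poly_mapping_eqI)
    fix k
    show "Poly_Mapping.lookup h k = Poly_Mapping.lookup (hin + hout) k"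
    proof (cases "k \<in> Poly_Mapping.keys h")
      case True then show ?thesis unfolding hin_def hout_def lookup_add lookup_mapp by simp
    next
      case False
      then have "Poly_Mapping.lookup h k = 0" using in_keys_iff by metis
      then show ?thesis unfolding hin_def hout_def lookup_add lookup_mapp using False by simp
    qed
  qed
  have khin: "Poly_Mapping.keys hin \<subseteq> Poly_Mapping.keys h"
    unfolding hin_def by (rule keys_mapp_subset)
  have hinA: "hin \<in> polyring S"
    by (rule polyring_I) (use khin polyring_D[OF h] in blast)
  have hinM: "hin \<in> ideal_in (polyring S) ((\<lambda>e. Poly_Mapping.single e (1::'k)) ` E)"
  proof (rule mon_ideal_I[OF hinA])
    fix n assume n: "n \<in> Poly_Mapping.keys hin"
    then have "Poly_Mapping.lookup hin n \<noteq> 0" using in_keys_iff by metis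
    then show "n \<in> Mon E" unfolding hin_def lookup_mapp by (cases "n \<in> Mon E") simp_all
  qed
  have hout_eq: "hout = h - hin" using split by simp
  have yzA: "var y - var z \<in> polyring S" by (intro polyring_diff polyring_var yS zS)
  have "(var y - var z) * hout = (var y - var z) * h - (var y - var z) * hin"
    unfolding hout_eq by (rule right_diff_distrib)
  also have "\<dots> \<in> ideal_in (polyring S) ((\<lambda>e. Poly_Mapping.single e (1::'k)) ` E)"
    by (rule pideal_diff[OF prod pideal_mult[OF hinM yzA]])
  finally have pout: "(var y - var z) * hout \<in> ideal_in (polyring S) ((\<lambda>e. Poly_Mapping.single e (1::'k)) ` E)" .
  have "hout = 0"
  proof (rule nzd_zero[OF yz meet])
    fix n assume "n \<in> Poly_Mapping.keys hout"
    then have "Poly_Mapping.lookup hout n \<noteq> 0" using in_keys_iff by metis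
    then show "n \<notin> Mon E" unfolding hout_def lookup_mapp by (cases "n \<in> Mon E") simp_all
  next
    fix n assume "n \<in> Poly_Mapping.keys ((var y - var z) * hout)"
    then show "n \<in> Mon E" by (rule keys_mgens_ideal[OF pout])
  qed (assumption+)
  then show ?thesis using split hinM by simp
qed

definition chainlike :: "('p::order \<times> nat) set \<Rightarrow> bool" where
  "chainlike K \<longleftrightarrow> (\<forall>x\<in>K. \<forall>y\<in>K. (op_prod_le x y \<or> op_prod_le y x) \<and> (x \<noteq> y \<longrightarrow> fst x \<noteq> fst y))"

lemma graph_mem: "(p, a) \<in> graph I \<alpha> \<longleftrightarrow> p \<in> I \<and> a = \<alpha> p"
  unfolding graph_def by blast

lemma graph_memE: "x \<in> graph I \<alpha> \<Longrightarrow> fst x \<in> I \<and> snd x = \<alpha> (fst x)"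
  unfolding graph_def by auto

lemma marker_mono_ext:
  fixes J :: "('p::{order,finite} \<Rightarrow> nat) set"
  assumes J: "hom_ideal J" and m: "marker J I \<alpha>" and I': "poset_ideal I'" and sub: "I \<subseteq> I'"
    and mono: "mono_on I' \<beta>" and le: "\<And>p. p \<in> I \<Longrightarrow> \<beta> p \<le> \<alpha> p"
  shows "marker J I' \<beta>"
  unfolding marker_def
proof (intro conjI I' mono allI impI)
  fix \<psi> :: "'p \<Rightarrow> nat" assume a: "mono \<psi> \<and> (\<forall>p\<in>I'. \<psi> p = \<beta> p)"
  have mI: "poset_ideal I" "mono_on I \<alpha>" and mext: "\<And>\<chi>. mono \<chi> \<Longrightarrow> (\<forall>p\<in>I. \<chi> p = \<alpha> p) \<Longrightarrow> \<chi> \<in> J"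
    using m unfolding marker_def by blast+
  define C where "C = (\<Sum>p\<in>I. \<alpha> p)"
  have Cge: "\<And>p. p \<in> I \<Longrightarrow> \<alpha> p \<le> C"
    unfolding C_def by (rule member_le_sum) simp_all
  define \<psi>' where "\<psi>' p = (if p \<in> I then \<alpha> p else \<psi> p + C)" for p
  have "mono \<psi>'"
  proof (rule monoI)
    fix p q :: 'p assume pq: "p \<le> q"
    show "\<psi>' p \<le> \<psi>' q"
    proof (cases "q \<in> I")
      case True
      then have "p \<in> I" using mI(1) pq unfolding poset_ideal_def by blast
      then show ?thesis using True pq mI(2) unfolding \<psi>'_def by (simp add: mono_on_def)
    next
      case False
      have "\<psi> p \<le> \<psi> q" using a pq unfolding mono_def by blast
      then show ?thesis using False Cge unfolding \<psi>'_def by (cases "p \<in> I") force+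
    qed
  qed
  then have "\<psi>' \<in> J" by (rule mext) (simp add: \<psi>'_def)
  moreover have "\<psi> \<le> \<psi>'"
  proof (rule le_funI)
    fix p show "\<psi> p \<le> \<psi>' p"
    proof (cases "p \<in> I")
      case True
      then have "\<psi> p = \<beta> p" using a sub by blast
      then show ?thesis using True le unfolding \<psi>'_def by simp
    qed (simp add: \<psi>'_def)
  qed
  ultimately show "\<psi> \<in> J" using J a unfolding hom_ideal_def by blast
qed

definition Aset :: "('p::order \<times> nat) set \<Rightarrow> 'p set \<Rightarrow> ('p \<Rightarrow> nat) \<Rightarrow> ('p \<times> nat) set" where
  "Aset F I \<alpha> = {x \<in> F. fst x \<in> I \<and> \<alpha> (fst x) \<le> snd x}"

lemma Aset_up:
  assumes x: "x \<in> Aset F I \<alpha>" and y: "y \<in> F" and xy: "op_prod_le x y"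
    and I: "poset_ideal I" and m: "mono_on I \<alpha>"
  shows "y \<in> Aset F I \<alpha>"
proof -
  have 1: "fst x \<in> I" "\<alpha> (fst x) \<le> snd x" using x unfolding Aset_def by blast+
  have 2: "fst y \<le> fst x" "snd x \<le> snd y" using xy unfolding op_prod_le_def by blast+
  have 3: "fst y \<in> I" using I 1(1) 2(1) unfolding poset_ideal_def by blast
  have "\<alpha> (fst y) \<le> \<alpha> (fst x)" using m 1(1) 3 2(1) unfolding mono_on_def by blast
  then show ?thesis using y 3 1(2) 2(2) unfolding Aset_def by simp
qed

lemma Aset_nested:
  assumes F: "chainlike F" and I1: "poset_ideal I1" "mono_on I1 \<alpha>1" and I2: "poset_ideal I2" "mono_on I2 \<alpha>2"
  shows "Aset F I1 \<alpha>1 \<subseteq> Aset F I2 \<alpha>2 \<or> Aset F I2 \<alpha>2 \<subseteq> Aset F I1 \<alpha>1"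
proof (rule ccontr)
  assume "\<not> ?thesis"
  then obtain x y where x: "x \<in> Aset F I1 \<alpha>1" "x \<notin> Aset F I2 \<alpha>2" and y: "y \<in> Aset F I2 \<alpha>2" "y \<notin> Aset F I1 \<alpha>1"
    by blast
  have xF: "x \<in> F" and yF: "y \<in> F" using x(1) y(1) unfolding Aset_def by blast+
  have "op_prod_le x y \<or> op_prod_le y x" using F xF yF unfolding chainlike_def by blast
  then show False
  proof
    assume "op_prod_le x y"
    then have "y \<in> Aset F I1 \<alpha>1" using Aset_up[OF x(1) yF _ I1] by blast
    then show False using y(2) by blast
  next
    assume "op_prod_le y x"
    then have "x \<in> Aset F I2 \<alpha>2" using Aset_up[OF y(1) xF _ I2] by blast
    then show False using x(2) by blast
  qed
qed

context
  fixes J :: "('p::{order,finite} \<Rightarrow> nat) set" and I1 I2 D :: "'p set" and \<alpha>1 \<alpha>2 :: "'p \<Rightarrow> nat"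
  assumes J: "hom_ideal J" and m1: "marker J I1 \<alpha>1" and m2: "marker J I2 \<alpha>2" and D: "poset_ideal D"
begin

definition "I3 = (I1 \<inter> D) \<union> I2"
definition "\<alpha>3 p = (if p \<in> D \<and> p \<in> I1 \<and> p \<in> I2 then min (\<alpha>1 p) (\<alpha>2 p)
                    else if p \<in> D \<and> p \<in> I1 then \<alpha>1 p else \<alpha>2 p)"

lemma i1: "poset_ideal I1" "mono_on I1 \<alpha>1" using m1 unfolding marker_def by blast+
lemma i2: "poset_ideal I2" "mono_on I2 \<alpha>2" using m2 unfolding marker_def by blast+

lemma down1: "p \<le> q \<Longrightarrow> q \<in> I1 \<Longrightarrow> p \<in> I1" using i1 unfolding poset_ideal_def by blast
lemma down2: "p \<le> q \<Longrightarrow> q \<in> I2 \<Longrightarrow> p \<in> I2" using i2 unfolding poset_ideal_def by blast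
lemma downD: "p \<le> q \<Longrightarrow> q \<in> D \<Longrightarrow> p \<in> D" using D unfolding poset_ideal_def by blast
lemma mono1: "p \<le> q \<Longrightarrow> q \<in> I1 \<Longrightarrow> \<alpha>1 p \<le> \<alpha>1 q"
  using i1(2) down1 unfolding mono_on_def by blast
lemma mono2: "p \<le> q \<Longrightarrow> q \<in> I2 \<Longrightarrow> \<alpha>2 p \<le> \<alpha>2 q"
  using i2(2) down2 unfolding mono_on_def by blast

lemma a3_le2: "p \<in> I2 \<Longrightarrow> \<alpha>3 p \<le> \<alpha>2 p"
  unfolding \<alpha>3_def by simp
lemma a3_le1: "p \<in> I1 \<Longrightarrow> p \<in> D \<Longrightarrow> \<alpha>3 p \<le> \<alpha>1 p"
  unfolding \<alpha>3_def by simp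

lemma I3_ideal: "poset_ideal I3"
  unfolding I3_def poset_ideal_def using down1 down2 downD by blast

lemma mono3: "mono_on I3 \<alpha>3"
proof (rule mono_onI)
  fix p q assume p: "p \<in> I3" and q: "q \<in> I3" and pq: "p \<le> q"
  show "\<alpha>3 p \<le> \<alpha>3 q"
  proof (cases "q \<in> D")
    case False
    then have "q \<in> I2" using q unfolding I3_def by blast
    then have "p \<in> I2" using down2 pq by blast
    have "\<alpha>3 q = \<alpha>2 q" unfolding \<alpha>3_def using False by simp
    then show ?thesis using a3_le2[OF \<open>p \<in> I2\<close>] mono2[OF pq \<open>q \<in> I2\<close>] by simp
  next
    case True
    then have pD: "p \<in> D" using downD pq by blast
    show ?thesis
    proof (cases "q \<in> I1 \<and> q \<in> I2")
      case True
      then have "p \<in> I1" "p \<in> I2" using down1 down2 pq by blast+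
      then show ?thesis using True \<open>q \<in> D\<close> pD mono1[OF pq] mono2[OF pq] unfolding \<alpha>3_def by (simp add: min_le_iff_disj)
    next
      case False
      show ?thesis
      proof (cases "q \<in> I1")
        case True
        then have "q \<notin> I2" using False by blast
        then have "\<alpha>3 q = \<alpha>1 q" using True \<open>q \<in> D\<close> unfolding \<alpha>3_def by simp
        moreover have "p \<in> I1" using down1 pq True by blast
        ultimately show ?thesis using a3_le1[OF \<open>p \<in> I1\<close> pD] mono1[OF pq True] by simp
      next
        case False
        then have "q \<in> I2" using q \<open>q \<in> D\<close> unfolding I3_def by blast
        then have "\<alpha>3 q = \<alpha>2 q" using False unfolding \<alpha>3_def by simp
        moreover have "p \<in> I2" using down2 pq \<open>q \<in> I2\<close> by blast
        ultimately show ?thesis using a3_le2[OF \<open>p \<in> I2\<close>] mono2[OF pq \<open>q \<in> I2\<close>] by simp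
      qed
    qed
  qed
qed

lemma marker3: "marker J I3 \<alpha>3"
  by (rule marker_mono_ext[OF J m2 I3_ideal _ mono3 a3_le2]) (auto simp: I3_def)

lemma G3_sub: "graph I3 \<alpha>3 \<subseteq> graph I1 \<alpha>1 \<union> graph I2 \<alpha>2"
proof
  fix x assume "x \<in> graph I3 \<alpha>3"
  then obtain p where x: "x = (p, \<alpha>3 p)" "p \<in> I3" unfolding graph_def by blast
  show "x \<in> graph I1 \<alpha>1 \<union> graph I2 \<alpha>2"
  proof (cases "p \<in> D \<and> p \<in> I1 \<and> p \<in> I2")
    case True
    show ?thesis
    proof (cases "\<alpha>1 p \<le> \<alpha>2 p")
      case True
      then have "\<alpha>3 p = \<alpha>1 p" using \<open>p \<in> D \<and> p \<in> I1 \<and> p \<in> I2\<close> unfolding \<alpha>3_def by simp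
      then have "x \<in> graph I1 \<alpha>1" unfolding x(1) graph_mem using \<open>p \<in> D \<and> p \<in> I1 \<and> p \<in> I2\<close> by simp
      then show ?thesis by blast
    next
      case False
      then have "\<alpha>3 p = \<alpha>2 p" using \<open>p \<in> D \<and> p \<in> I1 \<and> p \<in> I2\<close> unfolding \<alpha>3_def by simp
      then have "x \<in> graph I2 \<alpha>2" unfolding x(1) graph_mem using \<open>p \<in> D \<and> p \<in> I1 \<and> p \<in> I2\<close> by simp
      then show ?thesis by blast
    qed
  next
    case False
    show ?thesis
    proof (cases "p \<in> D \<and> p \<in> I1")
      case True
      then have "\<alpha>3 p = \<alpha>1 p" using False unfolding \<alpha>3_def by simp
      then have "x \<in> graph I1 \<alpha>1" unfolding x(1) graph_mem using True by simp
      then show ?thesis by blast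
    next
      case F2: False
      then have "\<alpha>3 p = \<alpha>2 p" unfolding \<alpha>3_def by auto
      moreover have "p \<in> I2" using x(2) F2 unfolding I3_def by blast
      ultimately have "x \<in> graph I2 \<alpha>2" unfolding x(1) graph_mem by simp
      then show ?thesis by blast
    qed
  qed
qed

lemma G3_chain:
  assumes K: "chainlike K"
  shows "graph I3 \<alpha>3 \<inter> K \<subseteq> graph I1 \<alpha>1 \<or> graph I3 \<alpha>3 \<inter> K \<subseteq> graph I2 \<alpha>2"
proof (rule ccontr)
  assume "\<not> ?thesis"
  then obtain x y where x3: "x \<in> graph I3 \<alpha>3" "x \<in> K" "x \<notin> graph I2 \<alpha>2"
    and y3: "y \<in> graph I3 \<alpha>3" "y \<in> K" "y \<notin> graph I1 \<alpha>1" by blast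
  obtain p where xp: "x = (p, \<alpha>3 p)" "p \<in> I3" using x3(1) unfolding graph_def by blast
  obtain q where yq: "y = (q, \<alpha>3 q)" "q \<in> I3" using y3(1) unfolding graph_def by blast
  have x1: "x \<in> graph I1 \<alpha>1" using x3 G3_sub by blast
  have y2: "y \<in> graph I2 \<alpha>2" using y3 G3_sub by blast
  have pI1: "p \<in> I1" and ap1: "\<alpha>3 p = \<alpha>1 p" using x1 unfolding xp graph_mem by blast+
  have qI2: "q \<in> I2" and aq2: "\<alpha>3 q = \<alpha>2 q" using y2 unfolding yq graph_mem by blast+
  have pn2: "p \<in> I2 \<Longrightarrow> \<alpha>3 p \<noteq> \<alpha>2 p" using x3(3) unfolding xp graph_mem by blast
  have qn1: "q \<in> I1 \<Longrightarrow> \<alpha>3 q \<noteq> \<alpha>1 q" using y3(3) unfolding yq graph_mem by blast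
  have pD: "p \<in> D"
  proof (rule ccontr)
    assume "p \<notin> D"
    then have "p \<in> I2" "\<alpha>3 p = \<alpha>2 p" using xp(2) unfolding I3_def \<alpha>3_def by auto
    then show False using pn2 by blast
  qed
  have "x \<noteq> y" using x3(3) y2 by blast
  have ch: "op_prod_le x y \<or> op_prod_le y x" using K x3(2) y3(2) unfolding chainlike_def by blast
  then show False
  proof
    assume "op_prod_le x y"
    then have qp: "q \<le> p" and le: "\<alpha>3 p \<le> \<alpha>3 q" unfolding op_prod_le_def xp yq by simp_all
    have "q \<in> D" "q \<in> I1" using downD[OF qp pD] down1[OF qp pI1] by blast+
    then have "\<alpha>3 q = min (\<alpha>1 q) (\<alpha>2 q)" using qI2 unfolding \<alpha>3_def by simp
    then have "\<alpha>2 q < \<alpha>1 q" using qn1[OF \<open>q \<in> I1\<close>] aq2 by (auto simp: min_def split: if_splits)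
    moreover have "\<alpha>1 q \<le> \<alpha>1 p" by (rule mono1[OF qp pI1])
    ultimately show False using le ap1 aq2 by simp
  next
    assume "op_prod_le y x"
    then have pq: "p \<le> q" and le: "\<alpha>3 q \<le> \<alpha>3 p" unfolding op_prod_le_def xp yq by simp_all
    have pI2: "p \<in> I2" using down2[OF pq qI2] .
    have "\<alpha>3 p = min (\<alpha>1 p) (\<alpha>2 p)" using pD pI1 pI2 unfolding \<alpha>3_def by simp
    then have "\<alpha>1 p < \<alpha>2 p" using pn2[OF pI2] ap1 by (auto simp: min_def split: if_splits)
    moreover have "\<alpha>2 p \<le> \<alpha>2 q" by (rule mono2[OF pq qI2])
    ultimately show False using le ap1 aq2 by simp
  qed
qed

lemma G3_F:
  assumes F: "chainlike F" and A21: "Aset F I2 \<alpha>2 \<subseteq> Aset F I1 \<alpha>1"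
    and Ddef: "D = {q. \<exists>x\<in>Aset F I2 \<alpha>2. q \<le> fst x}"
  shows "graph I3 \<alpha>3 \<inter> F \<subseteq> graph I1 \<alpha>1 \<inter> graph I2 \<alpha>2"
proof
  fix x assume x: "x \<in> graph I3 \<alpha>3 \<inter> F"
  then obtain p where xp: "x = (p, \<alpha>3 p)" "p \<in> I3" unfolding graph_def by blast
  have xF: "x \<in> F" using x by blast
  have pD: "p \<in> D"
  proof (rule ccontr)
    assume "p \<notin> D"
    then have "p \<in> I2" "\<alpha>3 p = \<alpha>2 p" using xp(2) unfolding I3_def \<alpha>3_def by auto
    then have xA: "x \<in> Aset F I2 \<alpha>2" using xF unfolding Aset_def xp(1) by simp
    have "p \<le> fst x" unfolding xp(1) by simp
    then have "p \<in> D" unfolding Ddef using xA by blast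
    then show False using \<open>p \<notin> D\<close> by blast
  qed
  obtain y where yA: "y \<in> Aset F I2 \<alpha>2" and py: "p \<le> fst y" using pD unfolding Ddef by blast
  have yF: "y \<in> F" using yA unfolding Aset_def by blast
  have xA2: "x \<in> Aset F I2 \<alpha>2"
  proof -
    have "op_prod_le x y \<or> op_prod_le y x" using F xF yF unfolding chainlike_def by blast
    then show ?thesis
    proof
      assume "op_prod_le x y"
      then have "fst y \<le> fst x" unfolding op_prod_le_def by blast
      then have "fst y = fst x" using py unfolding xp(1) by simp
      moreover have "x \<noteq> y \<longrightarrow> fst x \<noteq> fst y" using F xF yF unfolding chainlike_def by blast
      ultimately have "x = y" by metis
      then show ?thesis using yA by simp
    next
      assume "op_prod_le y x"
      then show ?thesis using Aset_up[OF yA xF _ i2] by blast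
    qed
  qed
  then have xA1: "x \<in> Aset F I1 \<alpha>1" using A21 by blast
  have p12: "p \<in> I1" "p \<in> I2" "\<alpha>1 p \<le> \<alpha>3 p" "\<alpha>2 p \<le> \<alpha>3 p"
    using xA1 xA2 unfolding Aset_def xp(1) by simp_all
  have "\<alpha>3 p = min (\<alpha>1 p) (\<alpha>2 p)" using pD p12(1,2) unfolding \<alpha>3_def by simp
  then have e: "\<alpha>3 p = \<alpha>1 p" "\<alpha>3 p = \<alpha>2 p" using p12(3,4) by linarith+
  show "x \<in> graph I1 \<alpha>1 \<inter> graph I2 \<alpha>2" unfolding xp(1) Int_iff graph_mem using p12(1,2) e by simp
qed

end


lemma comb_dir:
  fixes J :: "('p::{order,finite} \<Rightarrow> nat) set"
  assumes J: "hom_ideal J" and m1: "marker J I1 \<alpha>1" and m2: "marker J I2 \<alpha>2"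
    and F: "chainlike F" and A21: "Aset F I2 \<alpha>2 \<subseteq> Aset F I1 \<alpha>1"
  shows "\<exists>G3\<in>marker_graphs J. G3 \<subseteq> graph I1 \<alpha>1 \<union> graph I2 \<alpha>2
     \<and> G3 \<inter> F \<subseteq> graph I1 \<alpha>1 \<inter> graph I2 \<alpha>2
     \<and> (\<forall>K. chainlike K \<longrightarrow> G3 \<inter> K \<subseteq> graph I1 \<alpha>1 \<or> G3 \<inter> K \<subseteq> graph I2 \<alpha>2)"
proof -
  define D where "D = {q. \<exists>x\<in>Aset F I2 \<alpha>2. q \<le> fst x}"
  have D: "poset_ideal D" unfolding D_def poset_ideal_def using order_trans by blast
  show ?thesis
  proof (intro bexI conjI allI impI)
    show "graph (I3 I1 I2 D) (\<alpha>3 I1 I2 D \<alpha>1 \<alpha>2) \<in> marker_graphs J"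
      unfolding marker_graphs_def using marker3[OF J m1 m2 D] by blast
    show "graph (I3 I1 I2 D) (\<alpha>3 I1 I2 D \<alpha>1 \<alpha>2) \<subseteq> graph I1 \<alpha>1 \<union> graph I2 \<alpha>2"
      by (rule G3_sub[OF J m1 m2 D])
    show "graph (I3 I1 I2 D) (\<alpha>3 I1 I2 D \<alpha>1 \<alpha>2) \<inter> F \<subseteq> graph I1 \<alpha>1 \<inter> graph I2 \<alpha>2"
      by (rule G3_F[OF J m1 m2 D F A21 D_def])
    fix K :: "('p \<times> nat) set" assume "chainlike K"
    then show "graph (I3 I1 I2 D) (\<alpha>3 I1 I2 D \<alpha>1 \<alpha>2) \<inter> K \<subseteq> graph I1 \<alpha>1 \<or>
        graph (I3 I1 I2 D) (\<alpha>3 I1 I2 D \<alpha>1 \<alpha>2) \<inter> K \<subseteq> graph I2 \<alpha>2"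
      by (rule G3_chain[OF J m1 m2 D])
  qed
qed

lemma comb_markers:
  fixes J :: "('p::{order,finite} \<Rightarrow> nat) set"
  assumes J: "hom_ideal J" and G1: "G1 \<in> marker_graphs J" and G2: "G2 \<in> marker_graphs J"
    and F: "chainlike F"
  shows "\<exists>G3\<in>marker_graphs J. G3 \<subseteq> G1 \<union> G2 \<and> G3 \<inter> F \<subseteq> G1 \<inter> G2
     \<and> (\<forall>K. chainlike K \<longrightarrow> G3 \<inter> K \<subseteq> G1 \<or> G3 \<inter> K \<subseteq> G2)"
proof -
  obtain I1 \<alpha>1 where g1: "G1 = graph I1 \<alpha>1" and m1: "marker J I1 \<alpha>1"
    using G1 unfolding marker_graphs_def by blast
  obtain I2 \<alpha>2 where g2: "G2 = graph I2 \<alpha>2" and m2: "marker J I2 \<alpha>2"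
    using G2 unfolding marker_graphs_def by blast
  have i1: "poset_ideal I1" "mono_on I1 \<alpha>1" using m1 unfolding marker_def by blast+
  have i2: "poset_ideal I2" "mono_on I2 \<alpha>2" using m2 unfolding marker_def by blast+
  have "Aset F I1 \<alpha>1 \<subseteq> Aset F I2 \<alpha>2 \<or> Aset F I2 \<alpha>2 \<subseteq> Aset F I1 \<alpha>1"
    by (rule Aset_nested[OF F i1 i2])
  then show ?thesis
  proof
    assume "Aset F I2 \<alpha>2 \<subseteq> Aset F I1 \<alpha>1"
    then show ?thesis unfolding g1 g2 by (rule comb_dir[OF J m1 m2 F])
  next
    assume "Aset F I1 \<alpha>1 \<subseteq> Aset F I2 \<alpha>2"
    from comb_dir[OF J m2 m1 F this] obtain G3 where
      "G3 \<in> marker_graphs J" "G3 \<subseteq> graph I2 \<alpha>2 \<union> graph I1 \<alpha>1"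
      "G3 \<inter> F \<subseteq> graph I2 \<alpha>2 \<inter> graph I1 \<alpha>1"
      "\<forall>K. chainlike K \<longrightarrow> G3 \<inter> K \<subseteq> graph I2 \<alpha>2 \<or> G3 \<inter> K \<subseteq> graph I1 \<alpha>1" by blast
    note G3 = this
    have a: "G3 \<subseteq> graph I1 \<alpha>1 \<union> graph I2 \<alpha>2" using G3(2) by blast
    have b: "G3 \<inter> F \<subseteq> graph I1 \<alpha>1 \<inter> graph I2 \<alpha>2" using G3(3) by blast
    have c: "\<forall>K. chainlike K \<longrightarrow> G3 \<inter> K \<subseteq> graph I1 \<alpha>1 \<or> G3 \<inter> K \<subseteq> graph I2 \<alpha>2"
      using G3(4) by blast
    show ?thesis unfolding g1 g2 using G3(1) a b c by blast
  qed
qed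

lemma graph_finite: "finite (graph I (\<alpha>::'p::finite \<Rightarrow> nat))"
proof -
  have "graph I \<alpha> = (\<lambda>p. (p, \<alpha> p)) ` I" unfolding graph_def by blast
  then show ?thesis by simp
qed

lemma marker_graph_finite: "G \<in> marker_graphs (J :: ('p::{order,finite} \<Rightarrow> nat) set) \<Longrightarrow> finite G"
  unfolding marker_graphs_def using graph_finite by blast

lemma exists_min_below:
  fixes J :: "('p::{order,finite} \<Rightarrow> nat) set"
  shows "G \<in> marker_graphs J \<Longrightarrow> \<exists>H\<in>min_gen_graphs J. H \<subseteq> G"
proof (induction "card G" arbitrary: G rule: less_induct)
  case less
  show ?case
  proof (cases "G \<in> min_gen_graphs J")
    case True then show ?thesis by blast
  next
    case False
    then obtain H where H: "H \<in> marker_graphs J" "H \<subset> G" using less(2) unfolding min_gen_graphs_def by blast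
    have "card H < card G" using H(2) marker_graph_finite[OF less(2)] by (simp add: psubset_card_mono)
    then obtain H' where "H' \<in> min_gen_graphs J" "H' \<subseteq> H" using less(1) H(1) by blast
    then show ?thesis using H(2) by blast
  qed
qed

lemma comb_min:
  fixes J :: "('p::{order,finite} \<Rightarrow> nat) set"
  assumes J: "hom_ideal J" and G1: "G1 \<in> min_gen_graphs J" and G2: "G2 \<in> min_gen_graphs J"
    and F: "chainlike F"
  shows "\<exists>G3\<in>min_gen_graphs J. G3 \<subseteq> G1 \<union> G2 \<and> G3 \<inter> F \<subseteq> G1 \<inter> G2
     \<and> (\<forall>K. chainlike K \<longrightarrow> G3 \<inter> K \<subseteq> G1 \<or> G3 \<inter> K \<subseteq> G2)"
proof -
  have "G1 \<in> marker_graphs J" "G2 \<in> marker_graphs J" using G1 G2 unfolding min_gen_graphs_def by blast+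
  from comb_markers[OF J this F] obtain G3 where G3: "G3 \<in> marker_graphs J" "G3 \<subseteq> G1 \<union> G2"
    "G3 \<inter> F \<subseteq> G1 \<inter> G2" "\<forall>K. chainlike K \<longrightarrow> G3 \<inter> K \<subseteq> G1 \<or> G3 \<inter> K \<subseteq> G2" by blast
  obtain H where H: "H \<in> min_gen_graphs J" "H \<subseteq> G3" using exists_min_below[OF G3(1)] by blast
  have a: "H \<subseteq> G1 \<union> G2" using H(2) G3(2) by (rule order_trans)
  have b: "H \<inter> F \<subseteq> G1 \<inter> G2" using H(2) G3(3) by blast
  have c: "\<forall>K. chainlike K \<longrightarrow> H \<inter> K \<subseteq> G1 \<or> H \<inter> K \<subseteq> G2"
  proof (intro allI impI)
    fix K :: "('p \<times> nat) set" assume "chainlike K"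
    then have "G3 \<inter> K \<subseteq> G1 \<or> G3 \<inter> K \<subseteq> G2" using G3(4) by blast
    then show "H \<inter> K \<subseteq> G1 \<or> H \<inter> K \<subseteq> G2" using H(2) by blast
  qed
  show ?thesis using H(1) a b c by blast
qed

lemma cscale_module: "module (cscale :: 'k::field \<Rightarrow> ('p,'k) lpoly \<Rightarrow> ('p,'k) lpoly)"
proof
  fix a b :: 'k and x y :: "('p,'k) lpoly"
  show "cscale a (x + y) = cscale a x + cscale a y" unfolding cscale_def by (rule distrib_left)
  show "cscale (a + b) x = cscale a x + cscale b x" unfolding cscale_def single_add by (rule distrib_right)
  show "cscale a (cscale b x) = cscale (a * b) x" unfolding cscale_def
    by (simp only: mult.assoc[symmetric] mult_single add_0)
  show "cscale 1 x = x" unfolding cscale_def by (simp only: single_one mult_1_left)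
qed

lemma cscale_vs: "vector_space (cscale :: 'k::field \<Rightarrow> ('p,'k) lpoly \<Rightarrow> ('p,'k) lpoly)"
  using cscale_module module_iff_vector_space by blast

lemma single1_inj: "Poly_Mapping.single u (1::nat) = Poly_Mapping.single w 1 \<Longrightarrow> u = w"
proof -
  assume h: "Poly_Mapping.single u (1::nat) = Poly_Mapping.single w 1"
  have "Poly_Mapping.lookup (Poly_Mapping.single u (1::nat)) u = Poly_Mapping.lookup (Poly_Mapping.single w 1) u"
    using h by (rule arg_cong)
  then have "(1::nat) = Poly_Mapping.lookup (Poly_Mapping.single w 1) u" by (simp only: lookup_single_eq)
  show "u = w"
  proof (rule ccontr)
    assume "u \<noteq> w"
    then have "w \<noteq> u" by blast
    then have "Poly_Mapping.lookup (Poly_Mapping.single w (1::nat)) u = 0" by (rule lookup_single_not_eq)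
    then show False using \<open>1 = _\<close> by simp
  qed
qed

lemma var_lookup: "Poly_Mapping.lookup (var u :: ('p,'k::field) lpoly) (Poly_Mapping.single w 1) = (if u = w then 1 else 0)"
proof (cases "u = w")
  case True
  have "Poly_Mapping.lookup (var u :: ('p,'k::field) lpoly) (Poly_Mapping.single w 1) = 1"
    unfolding var_def True by (rule lookup_single_eq)
  then show ?thesis using True by simp
next
  case False
  have "Poly_Mapping.single u (1::nat) \<noteq> Poly_Mapping.single w 1"
  proof
    assume "Poly_Mapping.single u (1::nat) = Poly_Mapping.single w 1"
    then have "u = w" by (rule single1_inj)
    then show False using False by (rule notE[rotated])
  qed
  then have "Poly_Mapping.lookup (var u :: ('p,'k::field) lpoly) (Poly_Mapping.single w 1) = 0"
    unfolding var_def by (rule lookup_single_not_eq)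
  then show ?thesis using False by simp
qed

lemma var_diff_eq:
  assumes e: "(var u - var v :: ('p,'k::field) lpoly) = var s - var t" and uv: "u \<noteq> v"
  shows "(u = s \<or> u = t) \<and> (v = s \<or> v = t)"
proof -
  have lu: "Poly_Mapping.lookup (var u - var v :: ('p,'k) lpoly) (Poly_Mapping.single u 1) = 1"
    unfolding lookup_minus var_lookup using uv by simp
  have lv: "Poly_Mapping.lookup (var u - var v :: ('p,'k) lpoly) (Poly_Mapping.single v 1) = - 1"
    unfolding lookup_minus var_lookup using uv by simp
  have "u = s \<or> u = t"
  proof (rule ccontr)
    assume "\<not> (u = s \<or> u = t)"
    then have "Poly_Mapping.lookup (var s - var t :: ('p,'k) lpoly) (Poly_Mapping.single u 1) = 0"
      unfolding lookup_minus var_lookup by auto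
    then show False using lu unfolding e by simp
  qed
  moreover have "v = s \<or> v = t"
  proof (rule ccontr)
    assume "\<not> (v = s \<or> v = t)"
    then have "Poly_Mapping.lookup (var s - var t :: ('p,'k) lpoly) (Poly_Mapping.single v 1) = 0"
      unfolding lookup_minus var_lookup by auto
    then show False using lv unfolding e by simp
  qed
  ultimately show ?thesis by blast
qed

lemma rt_sym:
  assumes sym: "\<And>u v. R u v \<Longrightarrow> R v u" and r: "R\<^sup>*\<^sup>* u v" shows "R\<^sup>*\<^sup>* v u"
  using r
proof (induction rule: rtranclp_induct)
  case base show ?case by simp
next
  case (step y z)
  have "R z y" using sym step(2) .
  then show ?case using step(3) by (rule converse_rtranclp_into_rtranclp)
qed

lemma rt_fun:
  assumes f: "\<And>u v. R u v \<Longrightarrow> f u = f v" and r: "R\<^sup>*\<^sup>* u v" shows "f u = f v"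
  using r
proof (induction rule: rtranclp_induct)
  case base show ?case by simp
next
  case (step y z) then show ?case using f[OF step(2)] by simp
qed

lemma rt_mem:
  assumes f: "\<And>u v. R u v \<Longrightarrow> v \<in> S" and r: "R\<^sup>*\<^sup>* u v" and u: "u \<in> S" shows "v \<in> S"
  using r
proof (induction rule: rtranclp_induct)
  case base show ?case by (rule u)
next
  case (step y z) then show ?case using f[OF step(2)] by simp
qed

lemma rt_diff:
  assumes P0: "P 0" and Padd: "\<And>x y. P x \<Longrightarrow> P y \<Longrightarrow> P (x + y)"
    and PR: "\<And>u v. R u v \<Longrightarrow> P (var u - var v :: ('p,'k::field) lpoly)"
    and r: "R\<^sup>*\<^sup>* u v"
  shows "P (var u - var v :: ('p,'k::field) lpoly)"
  using r
proof (induction rule: rtranclp_induct)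
  case base show ?case using P0 by (simp only: diff_self)
next
  case (step y z)
  have "(var u - var z :: ('p,'k) lpoly) = (var u - var y) + (var y - var z)" by (rule diff_split)
  then show ?case using Padd[OF step(3) PR[OF step(2)]] by (simp only:)
qed

lemma nth_not_in_take:
  assumes "distinct xs" "i < length xs" shows "xs ! i \<notin> set (take i xs)"
proof
  assume "xs ! i \<in> set (take i xs)"
  then obtain j where j: "j < length (take i xs)" "take i xs ! j = xs ! i" by (metis in_set_conv_nth)
  have "j < i" using j(1) by simp
  then have "xs ! j = xs ! i" using j(2) by simp
  then have "j = i" using assms \<open>j < i\<close> nth_eq_iff_index_eq by (metis order.strict_trans)
  then show False using \<open>j < i\<close> by simp
qed

lemma subst_map:
  assumes rS: "\<And>u. u \<in> S \<Longrightarrow> \<rho> u \<in> S"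
    and Y: "\<And>y. y \<in> Y \<Longrightarrow> subst \<rho> y \<in> ideal_in (polyring S) Z"
    and f: "f \<in> ideal_in (polyring S) (Y :: ('p,'k::field) lpoly set)"
  shows "subst \<rho> f \<in> ideal_in (polyring S) Z"
proof -
  obtain F a where 1: "finite F" "F \<subseteq> Y" "\<And>g. g \<in> F \<Longrightarrow> a g \<in> polyring S" "f = (\<Sum>g\<in>F. a g * g)"
    using f unfolding ideal_in_def by blast
  have "subst \<rho> f = (\<Sum>g\<in>F. subst \<rho> (a g) * subst \<rho> g)"
    unfolding 1(4) subst_sum subst_mult ..
  also have "\<dots> \<in> ideal_in (polyring S) Z"
  proof (rule pideal_sum)
    fix g assume g: "g \<in> F"
    have "subst \<rho> g \<in> ideal_in (polyring S) Z" using Y 1(2) g by blast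
    moreover have "subst \<rho> (a g) \<in> polyring S" by (rule polyring_subst[OF 1(3)[OF g] rS])
    ultimately show "subst \<rho> (a g) * subst \<rho> g \<in> ideal_in (polyring S) Z" by (rule pideal_mult)
  qed
  finally show ?thesis .
qed

lemma lookup_sum_single_card:
  assumes "finite G"
  shows "Poly_Mapping.lookup (\<Sum>x\<in>G. Poly_Mapping.single (\<rho> x) (1::nat)) w = card {x\<in>G. \<rho> x = w}"
proof -
  have "Poly_Mapping.lookup (\<Sum>x\<in>G. Poly_Mapping.single (\<rho> x) (1::nat)) w = (\<Sum>x\<in>G. if \<rho> x = w then 1 else 0)"
    unfolding lookup_sum lookup_single when_def by (rule refl)
  also have "\<dots> = (\<Sum>x\<in>{x\<in>G. \<rho> x = w}. 1)"
    by (rule sum.inter_filter[symmetric]) (rule assms)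
  also have "\<dots> = card {x\<in>G. \<rho> x = w}" by simp
  finally show ?thesis .
qed

lemma edge_phi:
  assumes Bform: "\<forall>b\<in>B. \<exists>s\<in>S. \<exists>t\<in>S. \<phi> s = \<phi> t \<and> b = var s - var t"
    and x: "(var a - var c :: ('p,'k::field) lpoly) \<in> B"
  shows "\<phi> a = \<phi> c"
proof (cases "a = c")
  case True then show ?thesis by simp
next
  case False
  have "\<exists>s\<in>S. \<exists>t\<in>S. \<phi> s = \<phi> t \<and> (var a - var c :: ('p,'k) lpoly) = var s - var t"
    using Bform x by (rule bspec)
  then obtain s t where st: "\<phi> s = \<phi> t" "(var a - var c :: ('p,'k) lpoly) = var s - var t" by blast
  have "(a = s \<or> a = t) \<and> (c = s \<or> c = t)" by (rule var_diff_eq[OF st(2) False])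
  then show ?thesis using st(1) by metis
qed

lemma main_nzd:
  fixes J :: "('p::{order,finite} \<Rightarrow> nat) set" and S :: "('p \<times> nat) set"
    and \<phi> :: "'p \<times> nat \<Rightarrow> 'r" and B E :: "('p,'k::field) lpoly set"
  assumes J: "hom_ideal J" and SuppS: "Supp J \<subseteq> S"
    and lscf: "left_strict_chain_fibers S \<phi>"
    and Bform: "\<forall>b\<in>B. \<exists>s\<in>S. \<exists>t\<in>S. \<phi> s = \<phi> t \<and> b = var s - var t"
    and indep: "Modules.module.independent cscale B"
    and EB: "E \<subseteq> B" and bB: "b \<in> B" and bE: "b \<notin> E"
    and g: "g \<in> polyring S"
    and prod: "b * g \<in> ideal_in (polyring S) (coletterplace S J \<union> E)"
  shows "g \<in> ideal_in (polyring S) (coletterplace S J \<union> E)"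
proof -
  define X where "X = coletterplace S J \<union> E"
  define I where "I = ideal_in (polyring S) X"
  have "\<exists>s\<in>S. \<exists>t\<in>S. \<phi> s = \<phi> t \<and> b = var s - var t" using Bform bB by (rule bspec)
  then obtain s t where st: "s \<in> S" "t \<in> S" "\<phi> s = \<phi> t" "b = var s - var t" by blast
  define R where "R u v \<longleftrightarrow> u \<in> S \<and> v \<in> S \<and> ((var u - var v :: ('p,'k) lpoly) \<in> E \<or> var v - var u \<in> E)" for u v
  define eqv where "eqv = R\<^sup>*\<^sup>*"
  have Rsym: "\<And>u v. R u v \<Longrightarrow> R v u" unfolding R_def by blast
  have eqv_sym: "\<And>u v. eqv u v \<Longrightarrow> eqv v u" unfolding eqv_def by (rule rt_sym[OF Rsym])
  have eqv_trans: "\<And>u v w. eqv u v \<Longrightarrow> eqv v w \<Longrightarrow> eqv u w" unfolding eqv_def by (rule rtranclp_trans)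
  have eqv_refl: "\<And>u. eqv u u" unfolding eqv_def by (rule rtranclp.rtrancl_refl)
  have Rphi: "\<phi> u = \<phi> v" if "R u v" for u v
  proof -
    have "(var u - var v :: ('p,'k) lpoly) \<in> E \<or> var v - var u \<in> E" using that unfolding R_def by blast
    then show ?thesis
    proof
      assume "(var u - var v :: ('p,'k) lpoly) \<in> E"
      then have "(var u - var v :: ('p,'k) lpoly) \<in> B" using EB by (rule subsetD[rotated])
      then show ?thesis by (rule edge_phi[OF Bform])
    next
      assume "(var v - var u :: ('p,'k) lpoly) \<in> E"
      then have "(var v - var u :: ('p,'k) lpoly) \<in> B" using EB by (rule subsetD[rotated])
      then show ?thesis using edge_phi[OF Bform] by metis
    qed
  qed
  have eqv_phi: "\<And>u v. eqv u v \<Longrightarrow> \<phi> u = \<phi> v" unfolding eqv_def by (rule rt_fun[OF Rphi])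
  have RS: "\<And>u v. R u v \<Longrightarrow> v \<in> S" unfolding R_def by blast
  have eqv_S: "\<And>u v. eqv u v \<Longrightarrow> u \<in> S \<Longrightarrow> v \<in> S" unfolding eqv_def by (rule rt_mem[OF RS])
  have vs: "module (cscale :: 'k \<Rightarrow> ('p,'k) lpoly \<Rightarrow> ('p,'k) lpoly)" by (rule cscale_module)
  have eqv_span: "(var u - var v :: ('p,'k) lpoly) \<in> module.span cscale E" if "eqv u v" for u v
  proof -
    have r: "R\<^sup>*\<^sup>* u v" using that unfolding eqv_def .
    show ?thesis
    proof (rule rt_diff[where P = "\<lambda>x. x \<in> module.span cscale E"])
      show "R\<^sup>*\<^sup>* u v" by (rule r)
      show "0 \<in> module.span cscale E" by (rule module.span_zero[OF vs])
      show "x + y \<in> module.span cscale E" if "x \<in> module.span cscale E" "y \<in> module.span cscale E" for x y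
        by (rule module.span_add[OF vs that])
      show "(var u' - var v' :: ('p,'k) lpoly) \<in> module.span cscale E" if "R u' v'" for u' v'
      proof -
        have "(var u' - var v' :: ('p,'k) lpoly) \<in> E \<or> var v' - var u' \<in> E" using that unfolding R_def by blast
        then show ?thesis
        proof
          assume "(var u' - var v' :: ('p,'k) lpoly) \<in> E"
          then show ?thesis by (rule module.span_base[OF vs])
        next
          assume "(var v' - var u' :: ('p,'k) lpoly) \<in> E"
          then have "- (var v' - var u' :: ('p,'k) lpoly) \<in> module.span cscale E"
            by (rule module.span_neg[OF vs module.span_base[OF vs]])
          then show ?thesis by (simp only: minus_diff_eq)
        qed
      qed
    qed
  qed
  have eqv_ideal: "(var u - var v :: ('p,'k) lpoly) \<in> I" if "eqv u v" for u v
  proof -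
    have r: "R\<^sup>*\<^sup>* u v" using that unfolding eqv_def .
    show ?thesis
    proof (rule rt_diff[where P = "\<lambda>x. x \<in> I"])
      show "R\<^sup>*\<^sup>* u v" by (rule r)
      show "0 \<in> I" unfolding I_def by (rule ideal_zero)
      show "x + y \<in> I" if "x \<in> I" "y \<in> I" for x y
        using that unfolding I_def by (rule pideal_add)
      show "(var u' - var v' :: ('p,'k) lpoly) \<in> I" if "R u' v'" for u' v'
      proof -
        have "(var u' - var v' :: ('p,'k) lpoly) \<in> E \<or> var v' - var u' \<in> E" using that unfolding R_def by blast
        then show ?thesis
        proof
          assume "(var u' - var v' :: ('p,'k) lpoly) \<in> E"
          then have "(var u' - var v' :: ('p,'k) lpoly) \<in> X" unfolding X_def by (rule UnI2)
          then show ?thesis unfolding I_def by (rule pideal_gen)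
        next
          assume "(var v' - var u' :: ('p,'k) lpoly) \<in> E"
          then have "(var v' - var u' :: ('p,'k) lpoly) \<in> X" unfolding X_def by (rule UnI2)
          then have "- (var v' - var u' :: ('p,'k) lpoly) \<in> I" unfolding I_def by (rule pideal_uminus[OF pideal_gen])
          then show ?thesis by (simp only: minus_diff_eq)
        qed
      qed
    qed
  qed
  have nst: "\<not> eqv s t"
  proof
    assume "eqv s t"
    then have "b \<in> module.span cscale E" unfolding st(4) by (rule eqv_span)
    moreover have "module.span cscale E \<subseteq> module.span cscale (B - {b})"
      by (rule module.span_mono[OF vs]) (use EB bE in blast)
    ultimately have "b \<in> module.span cscale (B - {b})" by (rule subsetD[rotated])
    then have "Modules.module.dependent cscale B"
      unfolding vector_space.dependent_def[OF cscale_vs] using bB by blast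
    then show False using indep by (rule notE[rotated])
  qed
  define \<rho> where "\<rho> u = (SOME w. eqv u w)" for u
  have \<rho>1: "\<And>u. eqv u (\<rho> u)" unfolding \<rho>_def by (rule someI, rule eqv_refl)
  have \<rho>2: "\<rho> u = \<rho> v" if "eqv u v" for u v
  proof -
    have "(\<lambda>w. eqv u w) = (\<lambda>w. eqv v w)"
    proof (rule ext, rule iffI)
      fix w assume "eqv u w" then show "eqv v w" using eqv_trans eqv_sym that by blast
    next
      fix w assume "eqv v w" then show "eqv u w" using eqv_trans that by blast
    qed
    then show ?thesis unfolding \<rho>_def by simp
  qed
  have \<rho>S: "\<And>u. u \<in> S \<Longrightarrow> \<rho> u \<in> S" using eqv_S \<rho>1 by blast
  have dX: "\<And>u. u \<in> S \<Longrightarrow> (var u - var (\<rho> u) :: ('p,'k) lpoly) \<in> ideal_in (polyring S) X"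
    using eqv_ideal \<rho>1 unfolding I_def by blast
  have sd: "\<And>f. f \<in> polyring S \<Longrightarrow> f - subst \<rho> f \<in> I"
    unfolding I_def by (rule subst_diff_ideal[OF \<rho>S dX])
  define MG where "MG = min_gen_graphs J"
  have MGS: "\<And>G. G \<in> MG \<Longrightarrow> G \<subseteq> S" using SuppS unfolding MG_def Supp_def by blast
  have MGfin: "\<And>G. G \<in> MG \<Longrightarrow> finite G"
    unfolding MG_def min_gen_graphs_def using marker_graph_finite by blast
  define eG where "eG G = (\<Sum>x\<in>G. Poly_Mapping.single (\<rho> x) (1::nat))" for G
  define Eexp where "Eexp = eG ` MG"
  define M where "M = ideal_in (polyring S) ((\<lambda>e. Poly_Mapping.single e (1::'k)) ` Eexp)"
  have ssq: "\<And>G. subst \<rho> (sqmon G :: ('p,'k) lpoly) = Poly_Mapping.single (eG G) 1"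
    unfolding eG_def by (rule subst_sqmon)
  have colet: "coletterplace S J = ideal_in (polyring S) (sqmon ` MG)"
    unfolding coletterplace_def MG_def ..
  have XM: "subst \<rho> x \<in> M" if x: "x \<in> X" for x
  proof (cases "x \<in> coletterplace S J")
    case True
    then have xin: "x \<in> ideal_in (polyring S) (sqmon ` MG)" unfolding colet .
    have Yc: "subst \<rho> y \<in> ideal_in (polyring S) ((\<lambda>e. Poly_Mapping.single e (1::'k)) ` Eexp)"
      if "y \<in> (sqmon ` MG :: ('p,'k) lpoly set)" for y
    proof -
      from that obtain G where G: "G \<in> MG" "y = sqmon G" by blast
      have "Poly_Mapping.single (eG G) (1::'k) \<in> (\<lambda>e. Poly_Mapping.single e (1::'k)) ` Eexp"
        unfolding Eexp_def using G(1) by blast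
      then show "subst \<rho> y \<in> ideal_in (polyring S) ((\<lambda>e. Poly_Mapping.single e (1::'k)) ` Eexp)"
        unfolding G(2) ssq by (rule pideal_gen)
    qed
    show ?thesis unfolding M_def by (rule subst_map[OF \<rho>S Yc xin])
  next
    case False
    then have "x \<in> E" using x unfolding X_def by blast
    then have xB: "x \<in> B" using EB by (rule subsetD[rotated])
    have "\<exists>s\<in>S. \<exists>t\<in>S. \<phi> s = \<phi> t \<and> x = var s - var t" using Bform xB by (rule bspec)
    then obtain a c where ac: "a \<in> S" "c \<in> S" "x = var a - var c" by blast
    have "R a c" unfolding R_def using ac \<open>x \<in> E\<close> by blast
    then have "eqv a c" unfolding eqv_def by (rule r_into_rtranclp)
    then have "\<rho> a = \<rho> c" by (rule \<rho>2)
    then have "subst \<rho> x = 0" unfolding ac(3) subst_diff subst_var by simp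
    then show ?thesis unfolding M_def by (simp only: ideal_zero)
  qed
  have MI: "M \<subseteq> I" unfolding M_def I_def
  proof (rule pideal_trans)
    show "(\<lambda>e. Poly_Mapping.single e (1::'k)) ` Eexp \<subseteq> ideal_in (polyring S) X"
    proof
      fix y assume "y \<in> (\<lambda>e. Poly_Mapping.single e (1::'k)) ` Eexp"
      then obtain G where G: "G \<in> MG" "y = Poly_Mapping.single (eG G) 1" unfolding Eexp_def by blast
      have sqA: "(sqmon G :: ('p,'k) lpoly) \<in> polyring S" by (rule polyring_sqmon[OF MGfin[OF G(1)] MGS[OF G(1)]])
      have "(sqmon G :: ('p,'k) lpoly) \<in> coletterplace S J" unfolding colet using G(1) by (intro pideal_gen) blast
      then have sqX: "(sqmon G :: ('p,'k) lpoly) \<in> X" unfolding X_def by (rule UnI1)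
      have "sqmon G - (sqmon G - subst \<rho> (sqmon G)) \<in> ideal_in (polyring S) X"
        by (rule pideal_diff[OF pideal_gen[OF sqX] sd[OF sqA, unfolded I_def]])
      then show "y \<in> ideal_in (polyring S) X" unfolding G(2) ssq[symmetric] by simp
    qed
  qed
  have yz: "\<rho> s \<noteq> \<rho> t"
  proof
    assume "\<rho> s = \<rho> t"
    have "eqv s (\<rho> t)" using \<rho>1[of s] \<open>\<rho> s = \<rho> t\<close> by simp
    moreover have "eqv (\<rho> t) t" by (rule eqv_sym[OF \<rho>1])
    ultimately have "eqv s t" by (rule eqv_trans)
    then show False using nst by (rule notE[rotated])
  qed
  have XM': "\<And>y. y \<in> X \<Longrightarrow> subst \<rho> y \<in> ideal_in (polyring S) ((\<lambda>e. Poly_Mapping.single e (1::'k)) ` Eexp)"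
    using XM unfolding M_def .
  have prodX: "b * g \<in> ideal_in (polyring S) X" using prod unfolding X_def .
  have "subst \<rho> (b * g) \<in> ideal_in (polyring S) ((\<lambda>e. Poly_Mapping.single e (1::'k)) ` Eexp)"
    by (rule subst_map[OF \<rho>S XM' prodX])
  moreover have "subst \<rho> (b * g) = (var (\<rho> s) - var (\<rho> t)) * subst \<rho> g"
    unfolding subst_mult st(4) subst_diff subst_var ..
  ultimately have prodM: "(var (\<rho> s) - var (\<rho> t)) * subst \<rho> g \<in> ideal_in (polyring S) ((\<lambda>e. Poly_Mapping.single e (1::'k)) ` Eexp)"
    by simp
  have fibchain: "chainlike K" if K: "K \<subseteq> S" "\<And>x y. x \<in> K \<Longrightarrow> y \<in> K \<Longrightarrow> \<phi> x = \<phi> y" for K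
    unfolding chainlike_def
  proof (intro ballI)
    fix x y assume x: "x \<in> K" and y: "y \<in> K"
    have "x \<in> S" "y \<in> S" using K(1) x y by blast+
    moreover have "\<phi> x = \<phi> x" "\<phi> y = \<phi> x" using K(2)[OF y x] by simp_all
    ultimately show "(op_prod_le x y \<or> op_prod_le y x) \<and> (x \<noteq> y \<longrightarrow> fst x \<noteq> fst y)"
      using lscf unfolding left_strict_chain_fibers_def by blast
  qed
  define F where "F = {x\<in>S. \<phi> x = \<phi> s}"
  have Fchain: "chainlike F" by (rule fibchain) (auto simp: F_def)
  have Kchain: "chainlike {x\<in>S. \<rho> x = w}" for w
  proof (rule fibchain)
    show "{x\<in>S. \<rho> x = w} \<subseteq> S" by blast
    fix x y assume x: "x \<in> {x\<in>S. \<rho> x = w}" and y: "y \<in> {x\<in>S. \<rho> x = w}"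
    have "eqv x (\<rho> x)" "eqv (\<rho> y) y" using \<rho>1 eqv_sym by blast+
    moreover have "\<rho> x = \<rho> y" using x y by simp
    ultimately have "eqv x y" using eqv_trans by metis
    then show "\<phi> x = \<phi> y" by (rule eqv_phi)
  qed
  have meet: "n \<in> Mon Eexp" if n1: "n1 \<in> Mon Eexp" and n2: "n2 \<in> Mon Eexp"
    and agree: "\<And>v. v \<noteq> \<rho> s \<Longrightarrow> v \<noteq> \<rho> t \<Longrightarrow> Poly_Mapping.lookup n1 v = Poly_Mapping.lookup n2 v"
    and mn: "\<And>v. min (Poly_Mapping.lookup n1 v) (Poly_Mapping.lookup n2 v) \<le> Poly_Mapping.lookup n v"
    for n1 n2 n
  proof -
    obtain G1 where G1: "G1 \<in> MG" "\<And>v. Poly_Mapping.lookup (eG G1) v \<le> Poly_Mapping.lookup n1 v"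
      using n1 unfolding Mon_def Eexp_def by blast
    obtain G2 where G2: "G2 \<in> MG" "\<And>v. Poly_Mapping.lookup (eG G2) v \<le> Poly_Mapping.lookup n2 v"
      using n2 unfolding Mon_def Eexp_def by blast
    have "\<exists>G3\<in>min_gen_graphs J. G3 \<subseteq> G1 \<union> G2 \<and> G3 \<inter> F \<subseteq> G1 \<inter> G2
       \<and> (\<forall>K. chainlike K \<longrightarrow> G3 \<inter> K \<subseteq> G1 \<or> G3 \<inter> K \<subseteq> G2)"
      by (rule comb_min[OF J G1(1)[unfolded MG_def] G2(1)[unfolded MG_def] Fchain])
    then obtain G3 where G3: "G3 \<in> MG" "G3 \<inter> F \<subseteq> G1 \<inter> G2"
      "\<And>K. chainlike K \<Longrightarrow> G3 \<inter> K \<subseteq> G1 \<or> G3 \<inter> K \<subseteq> G2" unfolding MG_def by blast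
    have G3S: "G3 \<subseteq> S" by (rule MGS[OF G3(1)])
    have fin1: "finite G1" "finite G2" "finite G3" using MGfin G1(1) G2(1) G3(1) by blast+
    have cardl: "\<And>G. G \<in> MG \<Longrightarrow> Poly_Mapping.lookup (eG G) w = card {x\<in>G. \<rho> x = w}" for w
      unfolding eG_def by (rule lookup_sum_single_card[OF MGfin])
    show "n \<in> Mon Eexp"
    proof (rule MonI)
      show "eG G3 \<in> Eexp" unfolding Eexp_def using G3(1) by blast
      fix w
      have sub3: "{x\<in>G3. \<rho> x = w} \<subseteq> G3 \<inter> {x\<in>S. \<rho> x = w}" using G3S by blast
      show "Poly_Mapping.lookup (eG G3) w \<le> Poly_Mapping.lookup n w"
      proof (cases "w = \<rho> s \<or> w = \<rho> t")
        case True
        have "{x\<in>G3. \<rho> x = w} \<subseteq> G3 \<inter> F"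
        proof
          fix x assume x: "x \<in> {x\<in>G3. \<rho> x = w}"
          then have xS: "x \<in> S" and rx: "\<rho> x = w" using G3S by blast+
          have ex: "eqv x (\<rho> x)" by (rule \<rho>1)
          have "\<phi> x = \<phi> s"
          proof (cases "w = \<rho> s")
            case True
            have "eqv (\<rho> s) s" by (rule eqv_sym[OF \<rho>1])
            then have "eqv x s" using ex rx True eqv_trans by metis
            then show ?thesis by (rule eqv_phi)
          next
            case False
            then have "w = \<rho> t" using \<open>w = \<rho> s \<or> w = \<rho> t\<close> by blast
            have "eqv (\<rho> t) t" by (rule eqv_sym[OF \<rho>1])
            then have "eqv x t" using ex rx \<open>w = \<rho> t\<close> eqv_trans by metis
            then have "\<phi> x = \<phi> t" by (rule eqv_phi)
            then show ?thesis using st(3) by simp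
          qed
          then show "x \<in> G3 \<inter> F" using x xS unfolding F_def by blast
        qed
        then have s12: "{x\<in>G3. \<rho> x = w} \<subseteq> {x\<in>G1. \<rho> x = w}" "{x\<in>G3. \<rho> x = w} \<subseteq> {x\<in>G2. \<rho> x = w}"
          using G3(2) by blast+
        have "card {x\<in>G3. \<rho> x = w} \<le> card {x\<in>G1. \<rho> x = w}" by (rule card_mono[OF _ s12(1)]) (use fin1 in simp)
        then have a1: "Poly_Mapping.lookup (eG G3) w \<le> Poly_Mapping.lookup n1 w"
          using cardl[OF G3(1)] cardl[OF G1(1)] G1(2)[of w] by simp
        have "card {x\<in>G3. \<rho> x = w} \<le> card {x\<in>G2. \<rho> x = w}" by (rule card_mono[OF _ s12(2)]) (use fin1 in simp)
        then have a2: "Poly_Mapping.lookup (eG G3) w \<le> Poly_Mapping.lookup n2 w"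
          using cardl[OF G3(1)] cardl[OF G2(1)] G2(2)[of w] by simp
        show ?thesis using a1 a2 mn[of w] by simp
      next
        case False
        then have eq12: "Poly_Mapping.lookup n1 w = Poly_Mapping.lookup n2 w" using agree by blast
        have "G3 \<inter> {x\<in>S. \<rho> x = w} \<subseteq> G1 \<or> G3 \<inter> {x\<in>S. \<rho> x = w} \<subseteq> G2"
          by (rule G3(3)[OF Kchain])
        then have "{x\<in>G3. \<rho> x = w} \<subseteq> {x\<in>G1. \<rho> x = w} \<or> {x\<in>G3. \<rho> x = w} \<subseteq> {x\<in>G2. \<rho> x = w}"
          using sub3 by blast
        then show ?thesis
        proof
          assume s1: "{x\<in>G3. \<rho> x = w} \<subseteq> {x\<in>G1. \<rho> x = w}"
          have "card {x\<in>G3. \<rho> x = w} \<le> card {x\<in>G1. \<rho> x = w}" by (rule card_mono[OF _ s1]) (use fin1 in simp)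
          then have "Poly_Mapping.lookup (eG G3) w \<le> Poly_Mapping.lookup n1 w"
            using cardl[OF G3(1)] cardl[OF G1(1)] G1(2)[of w] by simp
          then show ?thesis using mn[of w] eq12 by simp
        next
          assume s2: "{x\<in>G3. \<rho> x = w} \<subseteq> {x\<in>G2. \<rho> x = w}"
          have "card {x\<in>G3. \<rho> x = w} \<le> card {x\<in>G2. \<rho> x = w}" by (rule card_mono[OF _ s2]) (use fin1 in simp)
          then have "Poly_Mapping.lookup (eG G3) w \<le> Poly_Mapping.lookup n2 w"
            using cardl[OF G3(1)] cardl[OF G2(1)] G2(2)[of w] by simp
          then show ?thesis using mn[of w] eq12 by simp
        qed
      qed
    qed
  qed
  have sgA: "subst \<rho> g \<in> polyring S" by (rule polyring_subst[OF g \<rho>S])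
  have "subst \<rho> g \<in> ideal_in (polyring S) ((\<lambda>e. Poly_Mapping.single e (1::'k)) ` Eexp)"
    by (rule nzd_mon[OF yz \<rho>S[OF st(1)] \<rho>S[OF st(2)] meet sgA prodM])
  then have sgI: "subst \<rho> g \<in> I" using MI unfolding M_def by blast
  have "subst \<rho> g + (g - subst \<rho> g) \<in> I" unfolding I_def
    by (rule pideal_add[OF sgI[unfolded I_def] sd[OF g, unfolded I_def]])
  then have "g \<in> I" by simp
  then show ?thesis unfolding I_def X_def .
qed

lemma add_eq0_right: "(m::'a \<Rightarrow>\<^sub>0 nat) + n = 0 \<Longrightarrow> n = 0"
proof (rule poly_mapping_eqI)
  fix v assume h: "m + n = 0"
  have "Poly_Mapping.lookup (m + n) v = Poly_Mapping.lookup 0 v" using h by (rule arg_cong)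
  then show "Poly_Mapping.lookup n v = Poly_Mapping.lookup 0 v" unfolding lookup_add lookup_zero by simp
qed

lemma single1_nz: "Poly_Mapping.single a (1::nat) \<noteq> 0"
proof
  assume "Poly_Mapping.single a (1::nat) = 0"
  then have "Poly_Mapping.lookup (Poly_Mapping.single a (1::nat)) a = Poly_Mapping.lookup 0 a" by (rule arg_cong)
  then show False unfolding lookup_single_eq lookup_zero by simp
qed

lemma lookup_mult_0:
  fixes a y :: "('p,'k::field) lpoly"
  assumes y0: "Poly_Mapping.lookup y 0 = 0"
  shows "Poly_Mapping.lookup (a * y) 0 = 0"
proof -
  have "a = (\<Sum>m\<in>Poly_Mapping.keys a. Poly_Mapping.single m (Poly_Mapping.lookup a m))" by (rule pm_repr)
  then have "a * y = (\<Sum>m\<in>Poly_Mapping.keys a. Poly_Mapping.single m (Poly_Mapping.lookup a m)) * y" by (rule arg_cong)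
  also have "\<dots> = (\<Sum>m\<in>Poly_Mapping.keys a. Poly_Mapping.single m (Poly_Mapping.lookup a m) * y)"
    by (rule sum_distrib_right)
  finally have e: "a * y = (\<Sum>m\<in>Poly_Mapping.keys a. Poly_Mapping.single m (Poly_Mapping.lookup a m) * y)" .
  have "(\<Sum>m\<in>Poly_Mapping.keys a. Poly_Mapping.lookup (Poly_Mapping.single m (Poly_Mapping.lookup a m) * y) 0) = 0"
  proof (rule sum.neutral, rule ballI)
    fix m
    have "(\<Sum>n\<in>Poly_Mapping.keys y. (Poly_Mapping.lookup a m * Poly_Mapping.lookup y n when m + n = 0)) = 0"
    proof (rule sum.neutral, rule ballI)
      fix n assume n: "n \<in> Poly_Mapping.keys y"
      show "(Poly_Mapping.lookup a m * Poly_Mapping.lookup y n when m + n = 0) = 0"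
      proof (cases "m + n = 0")
        case True
        then have "n = 0" by (rule add_eq0_right)
        then show ?thesis using y0 by simp
      next
        case False then show ?thesis by (simp only: when_def if_False)
      qed
    qed
    then show "Poly_Mapping.lookup (Poly_Mapping.single m (Poly_Mapping.lookup a m) * y) 0 = 0"
      unfolding lookup_single_mult_sum .
  qed
  then show ?thesis unfolding e lookup_sum .
qed

lemma const_ideal:
  assumes Y: "\<And>x. x \<in> Y \<Longrightarrow> Poly_Mapping.lookup x 0 = 0"
    and f: "f \<in> ideal_in A (Y :: ('p,'k::field) lpoly set)"
  shows "Poly_Mapping.lookup f 0 = 0"
proof -
  obtain F a where 1: "finite F" "F \<subseteq> Y" "f = (\<Sum>g\<in>F. a g * g)"
    using f unfolding ideal_in_def by blast
  have "(\<Sum>g\<in>F. Poly_Mapping.lookup (a g * g) 0) = 0"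
  proof (rule sum.neutral, rule ballI)
    fix g assume "g \<in> F"
    then have "Poly_Mapping.lookup g 0 = 0" using Y 1(2) by blast
    then show "Poly_Mapping.lookup (a g * g) 0 = 0" by (rule lookup_mult_0)
  qed
  then show ?thesis unfolding 1(3) lookup_sum .
qed

theorem theorem2p2:
  fixes J :: "('p::{order,finite} \<Rightarrow> nat) set"
    and S :: "('p \<times> nat) set"
    and \<phi> :: "'p \<times> nat \<Rightarrow> 'r::order"
    and B :: "('p, 'k::field) lpoly set"
  assumes "hom_ideal J"
    and "finite S" and "Supp J \<subseteq> S"
    and "\<forall>s\<in>S. \<forall>t\<in>S. prod_le s t \<longrightarrow> \<phi> s \<le> \<phi> t"
    and "left_strict_chain_fibers S \<phi>"
    and "\<forall>b\<in>B. \<exists>s\<in>S. \<exists>t\<in>S. \<phi> s = \<phi> t \<and> b = var s - var t"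
    and "Modules.module.independent cscale B"
    and "Modules.module.span cscale B = lin_kernel S \<phi>"
  shows "\<forall>bs. distinct bs \<and> set bs = B \<longrightarrow> regular_seq S (coletterplace S J) bs"
proof (intro allI impI)
  fix bs assume bs: "distinct bs \<and> set bs = B"
  have dist: "distinct bs" and setB: "set bs = B" using bs by blast+
  show "regular_seq S (coletterplace S J) bs"
    unfolding regular_seq_def
  proof (intro conjI allI impI ballI)
    fix i g assume i: "i < length bs" and g: "g \<in> polyring S"
      and pr: "bs ! i * g \<in> ideal_in (polyring S) (coletterplace S J \<union> set (take i bs))"
    show "g \<in> ideal_in (polyring S) (coletterplace S J \<union> set (take i bs))"
    proof (rule main_nzd[OF assms(1) assms(3) assms(5) assms(6) assms(7) _ _ _ g pr])
      show "set (take i bs) \<subseteq> B" unfolding setB[symmetric] by (rule set_take_subset)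
      show "bs ! i \<in> B" unfolding setB[symmetric] by (rule nth_mem[OF i])
      show "bs ! i \<notin> set (take i bs)" by (rule nth_not_in_take[OF dist i])
    qed
  next
    assume h1: "(1::('p,'k) lpoly) \<notin> ideal_in (polyring S) (coletterplace S J)"
    have ne: "G \<noteq> {}" if G: "G \<in> min_gen_graphs J" for G
    proof
      assume "G = {}"
      have "(sqmon G :: ('p,'k) lpoly) = 1" unfolding sqmon_def \<open>G = {}\<close> by simp
      moreover have "(sqmon G :: ('p,'k) lpoly) \<in> coletterplace S J"
        unfolding coletterplace_def by (intro pideal_gen imageI G)
      then have "(sqmon G :: ('p,'k) lpoly) \<in> ideal_in (polyring S) (coletterplace S J)"
        by (rule pideal_gen)
      ultimately have "(1::('p,'k) lpoly) \<in> ideal_in (polyring S) (coletterplace S J)"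
        by (simp only:)
      then show False by (rule notE[OF h1])
    qed
    have c1: "Poly_Mapping.lookup x 0 = 0" if x: "x \<in> (sqmon ` min_gen_graphs J :: ('p,'k) lpoly set)" for x
    proof -
      obtain G where G2: "x = sqmon G" and G1: "G \<in> min_gen_graphs J" using x by (rule imageE)
      note G = G1 G2
      have fin: "finite G" using G(1) marker_graph_finite unfolding min_gen_graphs_def by blast
      obtain t0 where t0: "t0 \<in> G" using ne[OF G(1)] by blast
      have "Poly_Mapping.lookup (\<Sum>t\<in>G. Poly_Mapping.single ((\<lambda>x. x) t) (1::nat)) t0 = card {x\<in>G. x = t0}"
        by (rule lookup_sum_single_card[OF fin])
      also have "{x\<in>G. x = t0} = {t0}" using t0 by blast
      finally have "Poly_Mapping.lookup (\<Sum>t\<in>G. Poly_Mapping.single t (1::nat)) t0 = 1" by simp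
      then have nz: "(\<Sum>t\<in>G. Poly_Mapping.single t (1::nat)) \<noteq> 0" by (metis lookup_zero zero_neq_one)
      show ?thesis unfolding G(2) sqmon_def by (rule lookup_single_not_eq[OF nz])
    qed
    have c2: "Poly_Mapping.lookup x 0 = 0" if x: "x \<in> (coletterplace S J :: ('p,'k) lpoly set)" for x
    proof -
      have x': "x \<in> ideal_in (polyring S) (sqmon ` min_gen_graphs J :: ('p,'k) lpoly set)"
        using x unfolding coletterplace_def .
      show ?thesis by (rule const_ideal[OF c1 x'])
    qed
    have c3: "Poly_Mapping.lookup x 0 = 0" if x: "x \<in> B" for x
    proof -
      have "\<exists>s\<in>S. \<exists>t\<in>S. \<phi> s = \<phi> t \<and> x = var s - var t" using assms(6) x by (rule bspec)
      then obtain a c where "a \<in> S" "c \<in> S" and ac': "\<phi> a = \<phi> c \<and> x = var a - var c" by (elim bexE)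
      then have ac: "x = var a - var c" by (elim conjE)
      have "Poly_Mapping.lookup (var a :: ('p,'k) lpoly) 0 = 0" "Poly_Mapping.lookup (var c :: ('p,'k) lpoly) 0 = 0"
        unfolding var_def by (rule lookup_single_not_eq[OF single1_nz])+
      then show ?thesis unfolding ac lookup_minus by simp
    qed
    show "1 \<notin> ideal_in (polyring S) (coletterplace S J \<union> set bs)"
    proof
      assume "1 \<in> ideal_in (polyring S) (coletterplace S J \<union> set bs)"
      moreover have "Poly_Mapping.lookup x 0 = 0" if x: "x \<in> coletterplace S J \<union> set bs" for x
        using x
      proof (rule UnE)
        assume "x \<in> coletterplace S J" then show ?thesis by (rule c2)
      next
        assume "x \<in> set bs" then have "x \<in> B" unfolding setB .
        then show ?thesis by (rule c3)
      qed
      ultimately have "Poly_Mapping.lookup (1::('p,'k) lpoly) 0 = 0" by (rule const_ideal[rotated])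
      then show False by simp
    qed
  qed
qed

end
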